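(* Let $T\ge2$, $n_t\ge T$, $\mathsf{snr}>0$, $\gamma=\mathsf{snr}/(1+\mathsf{snr})$. Let $\mathbf{X}$ be a random matrix in $\tilde{\mathcal{X}}_{\mathsf{snr}}$, and for $i=2,\dots,T$ let $\mathbf{r}_i\in\mathcal{B}_{i-1}$ denote the vector of the first $i-1$ entries of the $i$-th column of $\mathsf{snr}^{-1/2}\mathbf{X}$ (so that $\mathbf{X}$ is determined by $(\mathbf{r}_2,\dots,\mathbf{r}_T)$). If $(\mathbf{r}_2,\dots,\mathbf{r}_T)$ has density with respect to Lebesgue measure $$p\propto\prod_{i=2}^T(1-\|\mathbf{r}_i\|^2)^{\frac{T-i}{2}}\mathbb{1}(\mathbf{r}_i\in\mathcal{B}_{i-1}),$$ then $\mathbf{q}:=\boldsymbol{\rho}(\mathbf{X})$ is uniformly distributed on $\mathcal{Q}_\gamma$.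
   Context: $\mathcal{B}_n:=\{\mathbf{x}\in\mathbb{R}^n:\|\mathbf{x}\|\le1\}$. $\tilde{\mathcal{X}}_{\mathsf{snr}}$ is the set of $\mathbf{X}=[\mathbf{x}_1\cdots\mathbf{x}_T]\in\mathbb{R}^{n_t\times T}$ with $\|\mathbf{x}_j\|=\sqrt{\mathsf{snr}}$ for all $j$, $X_{ij}=0$ for $i>j$, and $X_{jj}\ge0$. $\boldsymbol{\rho}(\mathbf{X})\in\mathbb{R}^{\binom T2}$, indexed by unordered pairs of distinct elements of $\{1,\dots,T\}$, has entries $\rho_{\{i_1,i_2\}}(\mathbf{X})=\frac{\mathbf{x}_{i_1}^{\mathsf T}\mathbf{x}_{i_2}}{\sqrt{(1+\|\mathbf{x}_{i_1}\|^2)(1+\|\mathbf{x}_{i_2}\|^2)}}$. For $\mathbf{q}\in\mathbb{R}^{\binom T2}$, $\boldsymbol{\Sigma}(\mathbf{q})$ is the $T\times T$ symmetric matrix with unit diagonal and $(j,k)$ entry $q_{\{j,k\}}$, and $\mathcal{Q}_\gamma:=\{\mathbf{q}:\boldsymbol{\Sigma}(\mathbf{q})\succeq(1-\gamma)\mathbf{I}\}$. *)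

theory Defs
  imports "HOL-Probability.Probability"
begin

text \<open>Matrices are functions nat => nat => real, indexed 1-based: X i j is the entry in
  row i (1 <= i <= n_t) and column j (1 <= j <= T). Column j is x_j = (X 1 j, ..., X n_t j).\<close>

definition col_sqnorm :: "nat \<Rightarrow> (nat \<Rightarrow> nat \<Rightarrow> real) \<Rightarrow> nat \<Rightarrow> real" where
  "col_sqnorm nt X j = (\<Sum>l=1..nt. (X l j)^2)"

definition Xtilde :: "real \<Rightarrow> nat \<Rightarrow> nat \<Rightarrow> (nat \<Rightarrow> nat \<Rightarrow> real) set" where
  "Xtilde snr nt T = {X.
     (\<forall>j\<in>{1..T}. sqrt (col_sqnorm nt X j) = sqrt snr) \<and>
     (\<forall>i\<in>{1..nt}. \<forall>j\<in>{1..T}. i > j \<longrightarrow> X i j = 0) \<and>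
     (\<forall>j\<in>{1..T}. X j j \<ge> 0)}"

text \<open>Index set of the coordinates of (r_2,...,r_T): (i,k) means the k-th entry of r_i.\<close>
definition Ridx :: "nat \<Rightarrow> (nat \<times> nat) set" where
  "Ridx T = {(i,k). 2 \<le> i \<and> i \<le> T \<and> 1 \<le> k \<and> k < i}"

definition rvec :: "real \<Rightarrow> nat \<Rightarrow> (nat \<Rightarrow> nat \<Rightarrow> real) \<Rightarrow> (nat \<times> nat \<Rightarrow> real)" where
  "rvec snr T X = restrict (\<lambda>(i,k). X k i / sqrt snr) (Ridx T)"

definition rdens :: "nat \<Rightarrow> (nat \<times> nat \<Rightarrow> real) \<Rightarrow> real" where
  "rdens T r = (\<Prod>i=2..T.
      (let s = (\<Sum>k=1..i-1. (r (i,k))^2) in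
       sqrt ((1 - s) ^ (T - i)) * indicator {..1} (sqrt s)))"

text \<open>Unordered pairs {j,k} of distinct elements of {1..T}, represented as (j,k) with j<k.\<close>
definition Pidx :: "nat \<Rightarrow> (nat \<times> nat) set" where
  "Pidx T = {(j,k). 1 \<le> j \<and> j < k \<and> k \<le> T}"

definition rho_entry :: "nat \<Rightarrow> (nat \<Rightarrow> nat \<Rightarrow> real) \<Rightarrow> nat \<Rightarrow> nat \<Rightarrow> real" where
  "rho_entry nt X j k = (\<Sum>l=1..nt. X l j * X l k) /
      sqrt ((1 + (sqrt (col_sqnorm nt X j))^2) * (1 + (sqrt (col_sqnorm nt X k))^2))"

definition rho :: "nat \<Rightarrow> nat \<Rightarrow> (nat \<Rightarrow> nat \<Rightarrow> real) \<Rightarrow> (nat \<times> nat \<Rightarrow> real)" where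
  "rho nt T X = restrict (\<lambda>(j,k). rho_entry nt X j k) (Pidx T)"

definition Sigma_mat :: "(nat \<times> nat \<Rightarrow> real) \<Rightarrow> nat \<Rightarrow> nat \<Rightarrow> real" where
  "Sigma_mat q j k = (if j = k then 1 else if j < k then q (j,k) else q (k,j))"

definition Qset :: "nat \<Rightarrow> real \<Rightarrow> (nat \<times> nat \<Rightarrow> real) set" where
  "Qset T \<gamma> = {q \<in> Pidx T \<rightarrow>\<^sub>E UNIV.
     \<forall>v :: nat \<Rightarrow> real. (\<Sum>j=1..T. \<Sum>k=1..T. v j * Sigma_mat q j k * v k)
        \<ge> (1 - \<gamma>) * (\<Sum>j=1..T. (v j)^2)}"

end

theory Submission
  imports Defs
begin

abbreviation LB :: "'i set \<Rightarrow> ('i \<Rightarrow> real) measure" where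
  "LB I \<equiv> PiM I (\<lambda>_. lborel)"

lemma comp_meas: "j \<in> I \<Longrightarrow> (\<lambda>x. x j) \<in> borel_measurable (LB I)"
  using measurable_component_singleton[of j I "\<lambda>_. lborel"] by simp

lemma tri_step:
  fixes K :: "'i set" and rk :: "'i \<Rightarrow> nat" and a h :: "'i \<Rightarrow> ('i \<Rightarrow> real) \<Rightarrow> real"
  assumes fin: "finite K" and inj: "inj_on rk K"
  and dep: "\<And>i x y. i\<in>K \<Longrightarrow> (\<And>j. j\<in>K \<Longrightarrow> rk j < rk i \<Longrightarrow> x j = y j) \<Longrightarrow> a i x = a i y \<and> h i x = h i y"
  and nz: "\<And>i x. a i x \<noteq> 0"
  and meas: "\<And>i I. i\<in>K \<Longrightarrow> I \<subseteq> K \<Longrightarrow> (\<And>j. j\<in>K \<Longrightarrow> rk j < rk i \<Longrightarrow> j\<in>I) \<Longrightarrow>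
      a i \<in> borel_measurable (LB I) \<and> h i \<in> borel_measurable (LB I)"
  shows "\<forall>f \<in> borel_measurable (LB {j\<in>K. rk j < n}).
     (\<integral>\<^sup>+x. f (\<lambda>i\<in>{j\<in>K. rk j < n}. a i x * x i + h i x) * ennreal (\<Prod>i\<in>{j\<in>K. rk j < n}. \<bar>a i x\<bar>)
        \<partial>LB {j\<in>K. rk j < n}) = integral\<^sup>N (LB {j\<in>K. rk j < n}) f"
proof (induction n)
  case 0
  have e: "{j\<in>K. rk j < 0} = {}" by simp
  show ?case unfolding e
    by (simp add: PiM_empty nn_integral_count_space_finite)
next
  case (Suc n)
  define I where "I = {j\<in>K. rk j < n}"
  have finI: "finite I" using fin by (simp add: I_def)
  show ?case
  proof (cases "\<exists>b\<in>K. rk b = n")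
    case False
    then have "{j\<in>K. rk j < Suc n} = I" by (auto simp: I_def less_Suc_eq)
    then show ?thesis using Suc.IH by (simp add: I_def)
  next
    case True
    then obtain b where b: "b \<in> K" "rk b = n" by blast
    have bI: "b \<notin> I" using b by (simp add: I_def)
    have I': "{j\<in>K. rk j < Suc n} = insert b I" 
      using b inj by (auto simp: I_def less_Suc_eq inj_on_def)
    have IK: "insert b I \<subseteq> K" using b by (auto simp: I_def)
    define \<Phi> where "\<Phi> J x = (\<lambda>i\<in>J. a i x * x i + h i x)" for J x
    define P where "P J x = (\<Prod>i\<in>J. \<bar>a i x\<bar>)" for J x
    have Pnn: "P J x \<ge> 0" for J x unfolding P_def by (simp add: prod_nonneg)
    have measI: "a i \<in> borel_measurable (LB (insert b I)) \<and> h i \<in> borel_measurable (LB (insert b I))"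
      if "i \<in> insert b I" for i
      using that b by (intro meas) (auto simp: I_def)
    have \<Phi>meas: "\<Phi> (insert b I) \<in> measurable (LB (insert b I)) (LB (insert b I))"
      unfolding \<Phi>_def
      apply (rule measurable_restrict)
      using measI comp_meas by (simp add: borel_measurable_add borel_measurable_times)
    have Pmeas: "P (insert b I) \<in> borel_measurable (LB (insert b I))"
      unfolding P_def using measI by (intro borel_measurable_prod borel_measurable_abs) auto
    show ?thesis unfolding I' 
    proof (intro ballI)
      fix f :: "('i \<Rightarrow> real) \<Rightarrow> ennreal" assume fm: "f \<in> borel_measurable (LB (insert b I))"
      have key1: "\<Phi> (insert b I) (x(b:=y)) = (\<Phi> I x)(b := h b x + a b x * y)"
        and key2: "P (insert b I) (x(b:=y)) = \<bar>a b x\<bar> * P I x"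
        if "x \<in> space (LB I)" for x y
      proof -
        have agr: "a i (x(b:=y)) = a i x \<and> h i (x(b:=y)) = h i x" if "i \<in> insert b I" for i
          using that b IK by (intro dep) (auto simp: I_def)
        show "\<Phi> (insert b I) (x(b:=y)) = (\<Phi> I x)(b := h b x + a b x * y)"
          using agr bI by (auto simp: \<Phi>_def fun_eq_iff)
        show "P (insert b I) (x(b:=y)) = \<bar>a b x\<bar> * P I x"
          unfolding P_def using agr bI finI by (simp add: prod.insert)
      qed
      define G where "G w = (\<integral>\<^sup>+z. f (w(b:=z)) \<partial>lborel)" for w
      have Gm: "G \<in> borel_measurable (LB I)"
        unfolding G_def
        apply (rule lborel.borel_measurable_nn_integral)
        using measurable_comp[OF measurable_add_dim[of b I "\<lambda>_. lborel"] fm] by (simp add: comp_def case_prod_beta')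
      have "(\<integral>\<^sup>+x. f (\<Phi> (insert b I) x) * ennreal (P (insert b I) x) \<partial>LB (insert b I))
          = (\<integral>\<^sup>+x. \<integral>\<^sup>+y. f (\<Phi> (insert b I) (x(b:=y))) * ennreal (P (insert b I) (x(b:=y))) \<partial>lborel \<partial>LB I)"
        apply (rule product_sigma_finite.product_nn_integral_insert)
        apply (simp add: product_sigma_finite_def lborel.sigma_finite_measure_axioms)
        using finI bI apply auto[2]
        using measurable_comp[OF \<Phi>meas fm] Pmeas by (simp add: comp_def)
      also have "\<dots> = (\<integral>\<^sup>+x. G (\<Phi> I x) * ennreal (P I x) \<partial>LB I)"
      proof (rule nn_integral_cong)
        fix x assume x: "x \<in> space (LB I)"
        have \<Phi>x: "\<Phi> I x \<in> space (LB I)" by (simp add: \<Phi>_def space_PiM)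
        have fm1: "(\<lambda>z. f ((\<Phi> I x)(b := z))) \<in> borel_measurable borel"
          using measurable_comp[OF measurable_component_update[OF \<Phi>x bI] fm] by (simp add: comp_def)
        have "(\<integral>\<^sup>+y. f (\<Phi> (insert b I) (x(b:=y))) * ennreal (P (insert b I) (x(b:=y))) \<partial>lborel)
           = (\<integral>\<^sup>+y. ennreal (P I x) * (ennreal \<bar>a b x\<bar> * f ((\<Phi> I x)(b := h b x + a b x * y))) \<partial>lborel)"
        proof (intro nn_integral_cong)
          fix y
          have e: "ennreal (\<bar>a b x\<bar> * P I x) = ennreal \<bar>a b x\<bar> * ennreal (P I x)"
            using Pnn[of I x] by (simp add: ennreal_mult)
          show "f (\<Phi> (insert b I) (x(b:=y))) * ennreal (P (insert b I) (x(b:=y)))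
             = ennreal (P I x) * (ennreal \<bar>a b x\<bar> * f ((\<Phi> I x)(b := h b x + a b x * y)))"
            unfolding key1[OF x] key2[OF x] e by (simp only: ac_simps)
        qed
        also have "\<dots> = ennreal (P I x) * (ennreal \<bar>a b x\<bar> * (\<integral>\<^sup>+y. f ((\<Phi> I x)(b := h b x + a b x * y)) \<partial>lborel))"
        proof -
          have gm: "(\<lambda>y. f ((\<Phi> I x)(b := h b x + a b x * y))) \<in> borel_measurable lborel"
            using fm1 by simp
          show ?thesis using gm by (simp add: nn_integral_cmult)
        qed
        also have "\<dots> = ennreal (P I x) * G (\<Phi> I x)"
          unfolding G_def using nn_integral_real_affine[OF fm1 nz[of b x], of "h b x"] by simp
        finally show "(\<integral>\<^sup>+y. f (\<Phi> (insert b I) (x(b:=y))) * ennreal (P (insert b I) (x(b:=y))) \<partial>lborel)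
           = G (\<Phi> I x) * ennreal (P I x)" by (simp add: mult.commute)
      qed
      also have "\<dots> = integral\<^sup>N (LB I) G"
        using Suc.IH Gm unfolding I_def[symmetric] \<Phi>_def P_def by blast
      also have "\<dots> = integral\<^sup>N (LB (insert b I)) f"
        unfolding G_def
        apply (rule product_sigma_finite.product_nn_integral_insert[symmetric])
        apply (simp add: product_sigma_finite_def lborel.sigma_finite_measure_axioms)
        using finI bI fm by auto
      finally show "(\<integral>\<^sup>+x. f (\<lambda>i\<in>insert b I. a i x * x i + h i x) * ennreal (\<Prod>i\<in>insert b I. \<bar>a i x\<bar>) \<partial>LB (insert b I))
          = integral\<^sup>N (LB (insert b I)) f" unfolding \<Phi>_def P_def .
    qed
  qed
qed

lemma tri:
  fixes K :: "'i set" and rk :: "'i \<Rightarrow> nat" and a h :: "'i \<Rightarrow> ('i \<Rightarrow> real) \<Rightarrow> real"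
  assumes fin: "finite K" and inj: "inj_on rk K"
  and dep: "\<And>i x y. i\<in>K \<Longrightarrow> (\<And>j. j\<in>K \<Longrightarrow> rk j < rk i \<Longrightarrow> x j = y j) \<Longrightarrow> a i x = a i y \<and> h i x = h i y"
  and nz: "\<And>i x. a i x \<noteq> 0"
  and meas: "\<And>i I. i\<in>K \<Longrightarrow> I \<subseteq> K \<Longrightarrow> (\<And>j. j\<in>K \<Longrightarrow> rk j < rk i \<Longrightarrow> j\<in>I) \<Longrightarrow>
      a i \<in> borel_measurable (LB I) \<and> h i \<in> borel_measurable (LB I)"
  and f: "f \<in> borel_measurable (LB K)"
  shows "(\<integral>\<^sup>+x. f (\<lambda>i\<in>K. a i x * x i + h i x) * ennreal (\<Prod>i\<in>K. \<bar>a i x\<bar>) \<partial>LB K)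
     = integral\<^sup>N (LB K) f"
proof -
  define n where "n = Suc (Max (rk ` K))"
  have eq: "{j\<in>K. rk j < n} = K"
    using fin by (auto simp: n_def less_Suc_eq_le)
  have "\<forall>f \<in> borel_measurable (LB K).
     (\<integral>\<^sup>+x. f (\<lambda>i\<in>K. a i x * x i + h i x) * ennreal (\<Prod>i\<in>K. \<bar>a i x\<bar>) \<partial>LB K) = integral\<^sup>N (LB K) f"
  proof -
    note ts = tri_step[of K rk a h n]
    have "\<forall>f \<in> borel_measurable (LB {j\<in>K. rk j < n}).
     (\<integral>\<^sup>+x. f (\<lambda>i\<in>{j\<in>K. rk j < n}. a i x * x i + h i x) * ennreal (\<Prod>i\<in>{j\<in>K. rk j < n}. \<bar>a i x\<bar>)
        \<partial>LB {j\<in>K. rk j < n}) = integral\<^sup>N (LB {j\<in>K. rk j < n}) f"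
      apply (rule ts)
      using fin inj dep nz meas by blast+
    then show ?thesis unfolding eq .
  qed
  then show ?thesis using f by blast
qed

lemma reindex:
  fixes e :: "'j \<Rightarrow> 'i"
  assumes fin: "finite I" and bij: "bij_betw e J I"
  shows "distr (LB I) (LB J) (\<lambda>x. \<lambda>j\<in>J. x (e j)) = LB J"
proof (rule product_sigma_finite.PiM_eqI)
  show "product_sigma_finite (\<lambda>_. lborel :: real measure)"
    by (simp add: product_sigma_finite_def lborel.sigma_finite_measure_axioms)
  show finJ: "finite J" using bij fin bij_betw_finite by blast
  show "sets (distr (LB I) (LB J) (\<lambda>x. \<lambda>j\<in>J. x (e j))) = sets (LB J)" by simp
  have mapm: "(\<lambda>x. \<lambda>j\<in>J. x (e j)) \<in> measurable (LB I) (LB J)"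
    apply (rule measurable_restrict)
    using bij by (auto simp: bij_betw_def intro!: measurable_component_singleton)
  fix A :: "'j \<Rightarrow> real set" assume A: "\<And>j. j \<in> J \<Longrightarrow> A j \<in> sets lborel"
  have pre: "(\<lambda>x. \<lambda>j\<in>J. x (e j)) -` Pi\<^sub>E J A \<inter> space (LB I) = Pi\<^sub>E I (\<lambda>i. A (inv_into J e i))"
  proof (rule set_eqI)
    fix x :: "'i \<Rightarrow> real"
    have e1: "\<And>j. j \<in> J \<Longrightarrow> e j \<in> I" and e2: "\<And>j. j \<in> J \<Longrightarrow> inv_into J e (e j) = j"
      and e3: "\<And>i. i \<in> I \<Longrightarrow> inv_into J e i \<in> J" and e4: "\<And>i. i \<in> I \<Longrightarrow> e (inv_into J e i) = i"
      using bij by (auto simp: bij_betw_def inv_into_into f_inv_into_f)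
    show "x \<in> (\<lambda>x. \<lambda>j\<in>J. x (e j)) -` Pi\<^sub>E J A \<inter> space (LB I) \<longleftrightarrow> x \<in> Pi\<^sub>E I (\<lambda>i. A (inv_into J e i))"
    proof
      assume "x \<in> (\<lambda>x. \<lambda>j\<in>J. x (e j)) -` Pi\<^sub>E J A \<inter> space (LB I)"
      then have x1: "\<And>j. j \<in> J \<Longrightarrow> x (e j) \<in> A j" and x2: "x \<in> extensional I"
        by (auto simp: space_PiM PiE_iff)
      show "x \<in> Pi\<^sub>E I (\<lambda>i. A (inv_into J e i))"
        unfolding PiE_iff using x2 x1[OF e3] e4 by auto
    next
      assume "x \<in> Pi\<^sub>E I (\<lambda>i. A (inv_into J e i))"
      then have x1: "\<And>i. i \<in> I \<Longrightarrow> x i \<in> A (inv_into J e i)" and x2: "x \<in> extensional I"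
        by (auto simp: PiE_iff)
      show "x \<in> (\<lambda>x. \<lambda>j\<in>J. x (e j)) -` Pi\<^sub>E J A \<inter> space (LB I)"
        using x2 x1[OF e1] e2 by (auto simp: space_PiM PiE_iff)
    qed
  qed
  have "emeasure (distr (LB I) (LB J) (\<lambda>x. \<lambda>j\<in>J. x (e j))) (Pi\<^sub>E J A)
      = emeasure (LB I) (Pi\<^sub>E I (\<lambda>i. A (inv_into J e i)))"
  proof -
    have "Pi\<^sub>E J A \<in> sets (LB J)" using A finJ by (intro sets_PiM_I_finite) auto
    then show ?thesis by (simp add: emeasure_distr[OF mapm] pre)
  qed
  also have "\<dots> = (\<Prod>i\<in>I. emeasure lborel (A (inv_into J e i)))"
  proof (rule product_sigma_finite.emeasure_PiM)
    show "product_sigma_finite (\<lambda>_. lborel :: real measure)"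
      by (simp add: product_sigma_finite_def lborel.sigma_finite_measure_axioms)
    show "finite I" by (fact fin)
    fix i assume "i \<in> I"
    then have "inv_into J e i \<in> J" using bij by (metis bij_betw_def inv_into_into)
    then show "A (inv_into J e i) \<in> sets lborel" using A by blast
  qed
  also have "\<dots> = (\<Prod>j\<in>J. emeasure lborel (A j))"
    using bij by (subst prod.reindex_bij_betw[OF bij, symmetric]) (auto intro!: prod.cong simp: bij_betw_inv_into_left)
  finally show "emeasure (distr (LB I) (LB J) (\<lambda>x. \<lambda>j\<in>J. x (e j))) (Pi\<^sub>E J A) = (\<Prod>j\<in>J. emeasure lborel (A j))" .
qed


definition sR :: "nat \<Rightarrow> (nat \<times> nat \<Rightarrow> real) \<Rightarrow> real" where
  "sR i r = (\<Sum>l=1..i-1. (r (i,l))^2)"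

definition dt :: "nat \<Rightarrow> (nat \<times> nat \<Rightarrow> real) \<Rightarrow> real" where
  "dt i r = (if sR i r < 1 then sqrt (1 - sR i r) else 1)"

definition aF :: "real \<Rightarrow> nat \<times> nat \<Rightarrow> (nat \<times> nat \<Rightarrow> real) \<Rightarrow> real" where
  "aF \<gamma> p r = \<gamma> * dt (snd p) r"

definition hF :: "real \<Rightarrow> nat \<times> nat \<Rightarrow> (nat \<times> nat \<Rightarrow> real) \<Rightarrow> real" where
  "hF \<gamma> p r = \<gamma> * (\<Sum>l=1..snd p - 1. r (snd p, l) * r (fst p, l))"

definition PhiF :: "nat \<Rightarrow> real \<Rightarrow> (nat \<times> nat \<Rightarrow> real) \<Rightarrow> (nat \<times> nat \<Rightarrow> real)" where
  "PhiF T \<gamma> r = (\<lambda>p\<in>Ridx T. aF \<gamma> p r * r p + hF \<gamma> p r)"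

definition Gm :: "real \<Rightarrow> (nat \<times> nat \<Rightarrow> real) \<Rightarrow> nat \<Rightarrow> nat \<Rightarrow> real" where
  "Gm \<gamma> y j k = (if j = k then \<gamma> else if j < k then y (k,j) else y (j,k))"

definition quad :: "nat \<Rightarrow> (nat \<Rightarrow> nat \<Rightarrow> real) \<Rightarrow> (nat \<Rightarrow> real) \<Rightarrow> real" where
  "quad T G v = (\<Sum>j=1..T. \<Sum>k=1..T. v j * G j k * v k)"

definition Dp :: "nat \<Rightarrow> (nat \<times> nat \<Rightarrow> real) set" where
  "Dp T = {r. (\<forall>i\<in>{2..T-1}. sR i r < 1) \<and> sR T r \<le> 1}"

lemma gram:
  fixes A :: "nat \<Rightarrow> nat \<Rightarrow> real"
  shows "(\<Sum>j\<in>S. \<Sum>k\<in>S. v j * (\<Sum>l\<in>L. A l j * A l k) * v k) = (\<Sum>l\<in>L. (\<Sum>j\<in>S. A l j * v j)^2)"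
proof -
  have "(\<Sum>l\<in>L. (\<Sum>j\<in>S. A l j * v j)^2) = (\<Sum>l\<in>L. \<Sum>j\<in>S. \<Sum>k\<in>S. (A l j * v j) * (A l k * v k))"
    by (simp add: power2_eq_square sum_product)
  also have "\<dots> = (\<Sum>j\<in>S. \<Sum>l\<in>L. \<Sum>k\<in>S. (A l j * v j) * (A l k * v k))"
    by (rule sum.swap)
  also have "\<dots> = (\<Sum>j\<in>S. \<Sum>k\<in>S. \<Sum>l\<in>L. (A l j * v j) * (A l k * v k))"
    by (intro sum.cong refl sum.swap)
  also have "\<dots> = (\<Sum>j\<in>S. \<Sum>k\<in>S. v j * (\<Sum>l\<in>L. A l j * A l k) * v k)"
    by (intro sum.cong refl) (simp add: sum_distrib_left sum_distrib_right mult_ac)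
  finally show ?thesis ..
qed

lemma sum_upto_last:
  fixes g :: "nat \<Rightarrow> real"
  assumes "1 \<le> j" "j \<le> T" "\<And>l. j < l \<Longrightarrow> l \<le> T \<Longrightarrow> g l = 0"
  shows "(\<Sum>l=1..T. g l) = (\<Sum>l=1..j-1. g l) + g j"
proof -
  have "(\<Sum>l=1..T. g l) = (\<Sum>l=1..j. g l)"
    using assms by (intro sum.mono_neutral_right) auto
  also have "\<dots> = (\<Sum>l=1..j-1. g l) + g j"
    using assms(1) by (cases j) (auto simp: sum.cl_ivl_Suc)
  finally show ?thesis .
qed

lemma sR_1[simp]: "sR (Suc 0) r = 0" by (simp add: sR_def)
lemma sR_nn: "sR i r \<ge> 0" by (simp add: sR_def sum_nonneg)

lemma Dp_sR_lt: "r \<in> Dp T \<Longrightarrow> 1 \<le> j \<Longrightarrow> j < T \<Longrightarrow> sR j r < 1"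
proof (cases "j = 1")
  case False
  assume "r \<in> Dp T" "1 \<le> j" "j < T"
  then have "j \<in> {2..T-1}" using False by auto
  then show ?thesis using \<open>r \<in> Dp T\<close> by (auto simp: Dp_def)
qed simp
lemma Dp_sR_le: "r \<in> Dp T \<Longrightarrow> 1 \<le> j \<Longrightarrow> j \<le> T \<Longrightarrow> sR j r \<le> 1"
  using Dp_sR_lt[of r T j] by (cases "j = T") (auto simp: Dp_def)

lemma psd_of_Dp:
  assumes r: "r \<in> Dp T" and g: "\<gamma> \<ge> 0"
  shows "quad T (Gm \<gamma> (PhiF T \<gamma> r)) v \<ge> 0"
proof -
  define U where "U l j = (if l < j then r (j,l) else if l = j then sqrt (1 - sR j r) else 0)" for l j
  have off: "PhiF T \<gamma> r (k,j) = \<gamma> * (\<Sum>l=1..T. U l j * U l k)" if jk: "1 \<le> j" "j < k" "k \<le> T" for j k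
  proof -
    have R: "(k,j) \<in> Ridx T" using jk by (auto simp: Ridx_def)
    have dtj: "dt j r = sqrt (1 - sR j r)" using Dp_sR_lt[OF r, of j] jk by (simp add: dt_def)
    have "(\<Sum>l=1..T. U l j * U l k) = (\<Sum>l=1..j-1. U l j * U l k) + U j j * U j k"
      using jk by (intro sum_upto_last) (auto simp: U_def)
    also have "(\<Sum>l=1..j-1. U l j * U l k) = (\<Sum>l=1..j-1. r (j,l) * r (k,l))"
      using jk by (intro sum.cong) (auto simp: U_def)
    finally show ?thesis using R jk dtj
      by (simp add: PhiF_def aF_def hF_def U_def algebra_simps)
  qed
  have dia: "(\<Sum>l=1..T. U l j * U l j) = 1" if jk: "1 \<le> j" "j \<le> T" for j
  proof -
    have "(\<Sum>l=1..T. U l j * U l j) = (\<Sum>l=1..j-1. U l j * U l j) + U j j * U j j"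
      using jk by (intro sum_upto_last) (auto simp: U_def)
    also have "(\<Sum>l=1..j-1. U l j * U l j) = sR j r"
      unfolding sR_def using jk by (intro sum.cong) (auto simp: U_def power2_eq_square)
    finally show ?thesis using Dp_sR_le[OF r jk] by (simp add: U_def)
  qed
  have G: "Gm \<gamma> (PhiF T \<gamma> r) j k = \<gamma> * (\<Sum>l=1..T. U l j * U l k)" if "j \<in> {1..T}" "k \<in> {1..T}" for j k
    using that off[of j k] off[of k j] dia[of j] by (auto simp: Gm_def mult.commute)
  have "quad T (Gm \<gamma> (PhiF T \<gamma> r)) v = (\<Sum>j=1..T. \<Sum>k=1..T. v j * (\<gamma> * (\<Sum>l=1..T. U l j * U l k)) * v k)"
    unfolding quad_def using G by (intro sum.cong refl) auto
  also have "\<dots> = \<gamma> * (\<Sum>j=1..T. \<Sum>k=1..T. v j * (\<Sum>l=1..T. U l j * U l k) * v k)"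
    by (simp add: sum_distrib_left mult_ac)
  also have "\<dots> = \<gamma> * (\<Sum>l=1..T. (\<Sum>j=1..T. U l j * v j)^2)"
    by (simp add: gram)
  finally show ?thesis using g by (simp add: sum_nonneg)
qed

lemma tri_solve_aux:
  fixes U :: "nat \<Rightarrow> nat \<Rightarrow> real" and w :: "nat \<Rightarrow> real"
  assumes z: "\<And>l k. 1 \<le> k \<Longrightarrow> k < l \<Longrightarrow> l \<le> n \<Longrightarrow> U l k = 0"
    and d: "\<And>l. 1 \<le> l \<Longrightarrow> l \<le> n \<Longrightarrow> U l l \<noteq> 0"
  shows "\<exists>v. \<forall>l. n - m < l \<and> l \<le> n \<longrightarrow> (\<Sum>k=1..n. U l k * v k) = w l"
proof (induction m)
  case 0
  then show ?case by auto
next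
  case (Suc m)
  then obtain v where v: "\<forall>l. n - m < l \<and> l \<le> n \<longrightarrow> (\<Sum>k=1..n. U l k * v k) = w l" by blast
  show ?case
  proof (cases "m < n")
    case False
    then have "n - Suc m = n - m" by simp
    then show ?thesis using v by metis
  next
    case True
    define p where "p = n - m"
    have p: "1 \<le> p" "p \<le> n" using True by (auto simp: p_def)
    define v' where "v' = v(p := (w p - (\<Sum>k\<in>{1..n}-{p}. U p k * v k)) / U p p)"
    have "(\<Sum>k=1..n. U l k * v' k) = w l" if l: "n - Suc m < l" "l \<le> n" for l
    proof (cases "l = p")
      case True
      have "(\<Sum>k=1..n. U p k * v' k) = U p p * v' p + (\<Sum>k\<in>{1..n}-{p}. U p k * v' k)"
        using p by (subst sum.remove[of _ p]) auto
      also have "(\<Sum>k\<in>{1..n}-{p}. U p k * v' k) = (\<Sum>k\<in>{1..n}-{p}. U p k * v k)"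
        by (intro sum.cong) (auto simp: v'_def)
      finally show ?thesis using True d[OF p] by (simp add: v'_def)
    next
      case False
      then have lp: "p < l" using l by (auto simp: p_def)
      have "(\<Sum>k=1..n. U l k * v' k) = (\<Sum>k=1..n. U l k * v k)"
        using z[of p l] lp l p by (intro sum.cong) (auto simp: v'_def)
      then show ?thesis using v lp l by (auto simp: p_def)
    qed
    then show ?thesis by blast
  qed
qed

lemma tri_solve:
  fixes U :: "nat \<Rightarrow> nat \<Rightarrow> real" and w :: "nat \<Rightarrow> real"
  assumes z: "\<And>l k. 1 \<le> k \<Longrightarrow> k < l \<Longrightarrow> l \<le> n \<Longrightarrow> U l k = 0"
    and d: "\<And>l. 1 \<le> l \<Longrightarrow> l \<le> n \<Longrightarrow> U l l \<noteq> 0"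
  shows "\<exists>v. \<forall>l\<in>{1..n}. (\<Sum>k=1..n. U l k * v k) = w l"
proof -
  have "\<exists>v. \<forall>l. n - n < l \<and> l \<le> n \<longrightarrow> (\<Sum>k=1..n. U l k * v k) = w l"
    by (rule tri_solve_aux) (use z d in auto)
  then obtain v where "\<forall>l. 0 < l \<and> l \<le> n \<longrightarrow> (\<Sum>k=1..n. U l k * v k) = w l" by auto
  then show ?thesis by (intro exI[of _ v]) auto
qed

lemma dt_pos: "dt j r > 0"
  by (simp add: dt_def)

lemma quad_restrict:
  assumes "i \<le> T" "\<And>k. i < k \<Longrightarrow> v k = 0"
  shows "quad T G v = (\<Sum>j=1..i. \<Sum>k=1..i. v j * G j k * v k)"
proof -
  have "quad T G v = (\<Sum>j=1..T. \<Sum>k=1..i. v j * G j k * v k)"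
    unfolding quad_def using assms by (intro sum.cong refl sum.mono_neutral_right) auto
  also have "\<dots> = (\<Sum>j=1..i. \<Sum>k=1..i. v j * G j k * v k)"
    using assms by (intro sum.mono_neutral_right) auto
  finally show ?thesis .
qed

lemma not_D_min:
  assumes g: "\<gamma> > 0" and e: "\<epsilon> > 0"
    and q: "\<forall>v. quad T (Gm \<gamma> (PhiF T \<gamma> r)) v \<ge> \<epsilon> * (\<Sum>j=1..T. (v j)^2)"
    and i: "2 \<le> i" "i \<le> T" and si: "sR i r \<ge> 1"
    and min: "\<And>j. 2 \<le> j \<Longrightarrow> j < i \<Longrightarrow> sR j r < 1"
  shows False
proof -
  define U where "U l j = (if l < j then r (j,l) else if l = j then (if j = i then 1 else dt j r) else 0)" for l j
  obtain v0 where v0: "\<forall>l\<in>{1..i-1}. (\<Sum>k=1..i-1. U l k * v0 k) = - r (i,l)"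
  proof -
    have "\<exists>v. \<forall>l\<in>{1..i-1}. (\<Sum>k=1..i-1. U l k * v k) = - r (i,l)"
      by (rule tri_solve) (auto simp: U_def dt_pos[THEN less_imp_neq, symmetric])
    then show ?thesis using that by blast
  qed
  define v where "v j = (if j < i then v0 j else if j = i then 1 else 0)" for j
  define Sm where "Sm j k = (\<Sum>l=1..i. U l j * U l k)" for j k
  have off: "Gm \<gamma> (PhiF T \<gamma> r) j k = \<gamma> * Sm j k" if jk: "1 \<le> j" "j < k" "k \<le> i" for j k
  proof -
    have R: "(k,j) \<in> Ridx T" using jk i by (auto simp: Ridx_def)
    have "Sm j k = (\<Sum>l=1..j-1. U l j * U l k) + U j j * U j k"
      unfolding Sm_def using jk by (intro sum_upto_last) (auto simp: U_def)
    also have "(\<Sum>l=1..j-1. U l j * U l k) = (\<Sum>l=1..j-1. r (j,l) * r (k,l))"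
      using jk by (intro sum.cong) (auto simp: U_def)
    finally have "Sm j k = (\<Sum>l=1..j-1. r (j,l) * r (k,l)) + dt j r * r (k,j)"
      using jk by (simp add: U_def)
    then show ?thesis using R jk
      by (simp add: Gm_def PhiF_def aF_def hF_def algebra_simps)
  qed
  have dia: "Gm \<gamma> (PhiF T \<gamma> r) j j = \<gamma> * Sm j j - (if j = i then \<gamma> * sR i r else 0)"
    if jk: "1 \<le> j" "j \<le> i" for j
  proof -
    have "Sm j j = (\<Sum>l=1..j-1. U l j * U l j) + U j j * U j j"
      unfolding Sm_def using jk by (intro sum_upto_last) (auto simp: U_def)
    also have "(\<Sum>l=1..j-1. U l j * U l j) = sR j r"
      unfolding sR_def using jk by (intro sum.cong) (auto simp: U_def power2_eq_square)
    finally have S: "Sm j j = sR j r + U j j * U j j" .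
    show ?thesis
    proof (cases "j = i")
      case True then show ?thesis using S by (simp add: Gm_def U_def algebra_simps)
    next
      case False
      then have "sR j r < 1" using min[of j] jk by (cases "j = 1") auto
      then show ?thesis using S False sR_nn[of j r] by (simp add: Gm_def U_def dt_def algebra_simps)
    qed
  qed
  have G: "Gm \<gamma> (PhiF T \<gamma> r) j k = \<gamma> * Sm j k - (if j = i \<and> k = i then \<gamma> * sR i r else 0)"
    if "j \<in> {1..i}" "k \<in> {1..i}" for j k
  proof -
    consider "j < k" | "j = k" | "k < j" by linarith
    then show ?thesis
    proof cases
      case 1 then show ?thesis using off[of j k] that by auto
    next
      case 2 then show ?thesis using dia[of j] that by auto
    next
      case 3 then show ?thesis using off[of k j] that by (auto simp: Gm_def Sm_def mult.commute)
    qed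
  qed
  have "quad T (Gm \<gamma> (PhiF T \<gamma> r)) v = (\<Sum>j=1..i. \<Sum>k=1..i. v j * Gm \<gamma> (PhiF T \<gamma> r) j k * v k)"
    using i by (intro quad_restrict) (auto simp: v_def)
  also have "\<dots> = (\<Sum>j=1..i. \<Sum>k=1..i. \<gamma> * (v j * Sm j k * v k) - (if j = i \<and> k = i then \<gamma> * sR i r * v j * v k else 0))"
  proof (intro sum.cong refl)
    fix j k assume jk: "j \<in> {1..i}" "k \<in> {1..i}"
    show "v j * Gm \<gamma> (PhiF T \<gamma> r) j k * v k = \<gamma> * (v j * Sm j k * v k) - (if j = i \<and> k = i then \<gamma> * sR i r * v j * v k else 0)"
      unfolding G[OF jk] by (cases "j = i"; cases "k = i") (simp_all add: algebra_simps)
  qed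
  also have "\<dots> = \<gamma> * (\<Sum>j=1..i. \<Sum>k=1..i. v j * Sm j k * v k) - \<gamma> * sR i r"
  proof -
    have B: "(\<Sum>j=1..i. \<Sum>k=1..i. (if j = i \<and> k = i then \<gamma> * sR i r * v j * v k else 0)) = \<gamma> * sR i r"
    proof -
      have "(\<Sum>j=1..i. \<Sum>k=1..i. (if j = i \<and> k = i then \<gamma> * sR i r * v j * v k else 0))
          = (\<Sum>j=1..i. if j = i then (\<Sum>k=1..i. if k = i then \<gamma> * sR i r * v j * v k else 0) else 0)"
        by (intro sum.cong refl) auto
      also have "\<dots> = \<gamma> * sR i r * v i * v i"
        using i by (simp add: sum.delta)
      finally show ?thesis by (simp add: v_def)
    qed
    show ?thesis
      by (simp only: sum_subtractf B sum_distrib_left)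
  qed
  also have "(\<Sum>j=1..i. \<Sum>k=1..i. v j * Sm j k * v k) = (\<Sum>l=1..i. (\<Sum>j=1..i. U l j * v j)^2)"
    unfolding Sm_def by (rule gram)
  also have "\<dots> = 1"
  proof -
    have z: "(\<Sum>j=1..i. U l j * v j) = 0" if l: "1 \<le> l" "l \<le> i - 1" for l
    proof -
      have "(\<Sum>j=1..i. U l j * v j) = (\<Sum>j=1..i-1. U l j * v j) + U l i * v i"
        using i by (intro sum_upto_last) (auto simp: v_def)
      also have "(\<Sum>j=1..i-1. U l j * v j) = (\<Sum>j=1..i-1. U l j * v0 j)"
        by (intro sum.cong) (auto simp: v_def)
      finally show ?thesis using v0 l by (auto simp: U_def v_def)
    qed
    have o: "(\<Sum>j=1..i. U i j * v j) = 1"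
    proof -
      have "(\<Sum>j=1..i. U i j * v j) = (\<Sum>j=1..i-1. U i j * v j) + U i i * v i"
        using i by (intro sum_upto_last) auto
      also have "(\<Sum>j=1..i-1. U i j * v j) = 0"
        by (intro sum.neutral) (auto simp: U_def)
      finally show ?thesis by (simp add: U_def v_def)
    qed
    have "(\<Sum>l=1..i. (\<Sum>j=1..i. U l j * v j)^2) = (\<Sum>l=1..i-1. (\<Sum>j=1..i. U l j * v j)^2) + (\<Sum>j=1..i. U i j * v j)^2"
      using i by (intro sum_upto_last) auto
    also have "(\<Sum>l=1..i-1. (\<Sum>j=1..i. U l j * v j)^2) = 0"
      using z by (intro sum.neutral) auto
    finally show ?thesis using o by simp
  qed
  finally have qv: "quad T (Gm \<gamma> (PhiF T \<gamma> r)) v = \<gamma> * (1 - sR i r)" by (simp add: algebra_simps)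
  have "(\<Sum>j=1..T. (v j)^2) \<ge> (v i)^2"
    using i by (intro member_le_sum) auto
  then have "\<epsilon> * (\<Sum>j=1..T. (v j)^2) \<ge> \<epsilon>" using e by (simp add: v_def)
  moreover have "\<gamma> * (1 - sR i r) \<le> 0" using g si by (simp add: mult_nonneg_nonpos)
  ultimately show False using q[rule_format, of v] qv e by linarith
qed

lemma quad_split:
  "quad T (\<lambda>j k. t * G j k + (if j = k then c else 0)) v = t * quad T G v + c * (\<Sum>j=1..T. (v j)^2)"
proof -
  have "quad T (\<lambda>j k. t * G j k + (if j = k then c else 0)) v
     = (\<Sum>j=1..T. t * (\<Sum>k=1..T. v j * G j k * v k) + (\<Sum>k=1..T. if k = j then c * v j * v k else 0))"
    unfolding quad_def
  proof (intro sum.cong refl)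
    fix j
    have "(\<Sum>k=1..T. v j * (t * G j k + (if j = k then c else 0)) * v k)
       = (\<Sum>k=1..T. t * (v j * G j k * v k) + (if k = j then c * v j * v k else 0))"
      by (intro sum.cong refl) (auto simp: algebra_simps)
    also have "\<dots> = t * (\<Sum>k=1..T. v j * G j k * v k) + (\<Sum>k=1..T. if k = j then c * v j * v k else 0)"
      by (simp only: sum.distrib sum_distrib_left)
    finally show "(\<Sum>k=1..T. v j * (t * G j k + (if j = k then c else 0)) * v k)
       = t * (\<Sum>k=1..T. v j * G j k * v k) + (\<Sum>k=1..T. if k = j then c * v j * v k else 0)" .
  qed
  also have "\<dots> = (\<Sum>j=1..T. t * (\<Sum>k=1..T. v j * G j k * v k) + c * (v j)^2)"
  proof (intro sum.cong refl)
    fix j assume j: "j \<in> {1..T}"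
    have "(\<Sum>k\<in>{1..T}. if k = j then c * v j * v k else 0) = (if j \<in> {1..T} then c * v j * v j else 0)"
      by (rule sum.delta[OF finite_atLeastAtMost])
    then show "t * (\<Sum>k=1..T. v j * G j k * v k) + (\<Sum>k=1..T. if k = j then c * v j * v k else 0)
        = t * (\<Sum>k=1..T. v j * G j k * v k) + c * (v j)^2"
      using j by (simp add: power2_eq_square)
  qed
  finally show ?thesis by (simp add: quad_def sum.distrib sum_distrib_left)
qed

lemma strict_D:
  assumes g: "\<gamma> > 0" and t: "0 < t" "t < 1"
    and q: "\<forall>v. quad T (Gm \<gamma> (\<lambda>p\<in>Ridx T. PhiF T \<gamma> r p / t)) v \<ge> 0"
  shows "\<forall>i\<in>{2..T}. sR i r < 1"
proof (rule ccontr)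
  assume "\<not> (\<forall>i\<in>{2..T}. sR i r < 1)"
  then have ex: "\<exists>i. (2 \<le> i \<and> i \<le> T) \<and> sR i r \<ge> 1" by auto
  define i where "i = (LEAST i. (2 \<le> i \<and> i \<le> T) \<and> sR i r \<ge> 1)"
  have i: "(2 \<le> i \<and> i \<le> T) \<and> sR i r \<ge> 1" unfolding i_def by (rule LeastI_ex[OF ex])
  have min: "sR j r < 1" if "2 \<le> j" "j < i" for j
  proof (rule ccontr)
    assume "\<not> sR j r < 1"
    then have "i \<le> j" unfolding i_def using that i by (intro Least_le) auto
    then show False using that by simp
  qed
  define y where "y = PhiF T \<gamma> r"
  have Geq: "Gm \<gamma> y j k = t * Gm \<gamma> (\<lambda>p\<in>Ridx T. y p / t) j k + (if j = k then (1 - t) * \<gamma> else 0)"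
    if "j \<in> {1..T}" "k \<in> {1..T}" for j k
    using that t by (auto simp: Gm_def Ridx_def algebra_simps)
  have "quad T (Gm \<gamma> y) v \<ge> ((1 - t) * \<gamma>) * (\<Sum>j=1..T. (v j)^2)" for v
  proof -
    have "quad T (Gm \<gamma> y) v = quad T (\<lambda>j k. t * Gm \<gamma> (\<lambda>p\<in>Ridx T. y p / t) j k + (if j = k then (1 - t) * \<gamma> else 0)) v"
      unfolding quad_def using Geq by (intro sum.cong refl) auto
    also have "\<dots> = t * quad T (Gm \<gamma> (\<lambda>p\<in>Ridx T. y p / t)) v + ((1 - t) * \<gamma>) * (\<Sum>j=1..T. (v j)^2)"
      by (rule quad_split)
    finally show ?thesis using q t unfolding y_def by (simp add: mult_nonneg_nonneg)
  qed
  then show False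
    using not_D_min[OF g _ _ _ _ _ min, of "(1 - t) * \<gamma>" T] i g t unfolding y_def by auto
qed


definition swp :: "nat \<Rightarrow> (nat \<times> nat \<Rightarrow> real) \<Rightarrow> (nat \<times> nat \<Rightarrow> real)" where
  "swp T y = (\<lambda>p\<in>Pidx T. y (snd p, fst p))"

definition Kset :: "nat \<Rightarrow> real \<Rightarrow> (nat \<times> nat \<Rightarrow> real) set" where
  "Kset T \<gamma> = {y \<in> space (LB (Ridx T)). \<forall>v. quad T (Gm \<gamma> y) v \<ge> 0}"

lemma finite_Ridx: "finite (Ridx T)"
proof -
  have "Ridx T \<subseteq> {..T} \<times> {..T}" by (auto simp: Ridx_def)
  then show ?thesis by (rule finite_subset) auto
qed

lemma finite_Pidx: "finite (Pidx T)"
proof -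
  have "Pidx T \<subseteq> {..T} \<times> {..T}" by (auto simp: Pidx_def)
  then show ?thesis by (rule finite_subset) auto
qed

lemma bij_swap: "bij_betw (\<lambda>p. (snd p, fst p)) (Pidx T) (Ridx T)"
  unfolding bij_betw_def inj_on_def
proof (intro conjI ballI impI)
  show "(\<lambda>p. (snd p, fst p)) ` Pidx T = Ridx T"
  proof
    show "(\<lambda>p. (snd p, fst p)) ` Pidx T \<subseteq> Ridx T" by (auto simp: Pidx_def Ridx_def)
    show "Ridx T \<subseteq> (\<lambda>p. (snd p, fst p)) ` Pidx T"
    proof
      fix x assume "x \<in> Ridx T"
      then show "x \<in> (\<lambda>p. (snd p, fst p)) ` Pidx T"
        by (intro image_eqI[of _ _ "(snd x, fst x)"]) (auto simp: Pidx_def Ridx_def)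
    qed
  qed
qed (auto simp: prod_eq_iff)

lemma swp_distr: "distr (LB (Ridx T)) (LB (Pidx T)) (swp T) = LB (Pidx T)"
  unfolding swp_def by (rule reindex[OF finite_Ridx bij_swap])

lemma swp_meas: "swp T \<in> measurable (LB (Ridx T)) (LB (Pidx T))"
  unfolding swp_def
  by (rule measurable_restrict) (auto simp: Pidx_def Ridx_def intro!: measurable_component_singleton)

lemma swp_integral:
  assumes "g \<in> borel_measurable (LB (Pidx T))"
  shows "(\<integral>\<^sup>+y. g (swp T y) \<partial>LB (Ridx T)) = integral\<^sup>N (LB (Pidx T)) g"
proof -
  have "integral\<^sup>N (LB (Pidx T)) g = integral\<^sup>N (distr (LB (Ridx T)) (LB (Pidx T)) (swp T)) g"
    by (simp add: swp_distr)
  also have "\<dots> = (\<integral>\<^sup>+y. g (swp T y) \<partial>LB (Ridx T))"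
    by (rule nn_integral_distr[OF swp_meas]) (use assms in simp)
  finally show ?thesis ..
qed

definition rk :: "nat \<Rightarrow> nat \<times> nat \<Rightarrow> nat" where
  "rk T p = fst p * (T + 1) + snd p"

lemma rk_inj: "inj_on (rk T) (Ridx T)"
proof (rule inj_onI)
  fix p q assume p: "p \<in> Ridx T" and q: "q \<in> Ridx T" and e: "rk T p = rk T q"
  have "snd p < T + 1" "snd q < T + 1" using p q by (auto simp: Ridx_def)
  have rp: "rk T p = snd p + (T+1) * fst p" "rk T q = snd q + (T+1) * fst q"
    by (simp_all add: rk_def)
  have "rk T p div (T+1) = fst p" "rk T p mod (T+1) = snd p"
     "rk T q div (T+1) = fst q" "rk T q mod (T+1) = snd q"
    unfolding rp using \<open>snd p < T + 1\<close> \<open>snd q < T + 1\<close>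
    by (simp_all only: div_mult_self2 mod_mult_self2 div_less mod_less)
  then show "p = q" using e by (simp add: prod_eq_iff)
qed

lemma rk_less:
  assumes "(i,k) \<in> Ridx T" "k' < i" "l \<le> T"
  shows "rk T (k',l) < rk T (i,k)"
proof -
  have "k' * (T+1) + l < k' * (T+1) + (T+1)" using assms by simp
  also have "\<dots> = (k'+1) * (T+1)" by simp
  also have "\<dots> \<le> i * (T+1)" using assms by (intro mult_right_mono) auto
  finally show ?thesis by (simp add: rk_def)
qed

lemma sR_meas:
  assumes "\<And>l. l \<in> {1..k-1} \<Longrightarrow> (k,l) \<in> I"
  shows "sR k \<in> borel_measurable (LB I)"
  unfolding sR_def
  by (intro borel_measurable_sum borel_measurable_power comp_meas assms)

lemma dt_meas:
  assumes "\<And>l. l \<in> {1..k-1} \<Longrightarrow> (k,l) \<in> I"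
  shows "dt k \<in> borel_measurable (LB I)"
proof -
  note sR_meas[OF assms, measurable]
  show ?thesis unfolding dt_def by measurable
qed

lemma Phi_integral:
  assumes g: "\<gamma> > 0" and f: "f \<in> borel_measurable (LB (Ridx T))"
  shows "(\<integral>\<^sup>+r. f (PhiF T \<gamma> r) * ennreal (\<Prod>p\<in>Ridx T. \<bar>aF \<gamma> p r\<bar>) \<partial>LB (Ridx T))
     = integral\<^sup>N (LB (Ridx T)) f"
  unfolding PhiF_def
proof (rule tri[OF finite_Ridx rk_inj _ _ _ f])
  fix p and x y :: "nat \<times> nat \<Rightarrow> real"
  assume p: "p \<in> Ridx T" and agree: "\<And>j. j \<in> Ridx T \<Longrightarrow> rk T j < rk T p \<Longrightarrow> x j = y j"
  obtain i k where pik: "p = (i,k)" by (cases p)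
  have ik: "2 \<le> i" "i \<le> T" "1 \<le> k" "k < i" using p by (auto simp: pik Ridx_def)
  have a1: "x (k,l) = y (k,l)" if "l \<in> {1..k-1}" for l
    using that ik by (intro agree) (auto simp: Ridx_def pik intro!: rk_less[OF p[unfolded pik]])
  have a2: "x (i,l) = y (i,l)" if "l \<in> {1..k-1}" for l
    using that ik by (intro agree) (auto simp: Ridx_def pik rk_def)
  have "sR k x = sR k y" unfolding sR_def using a1 by (intro sum.cong) auto
  then show "aF \<gamma> p x = aF \<gamma> p y \<and> hF \<gamma> p x = hF \<gamma> p y"
    using a1 a2 by (auto simp: aF_def hF_def dt_def pik intro!: sum.cong)
next
  fix p x show "aF \<gamma> p x \<noteq> 0" using g dt_pos[of "snd p" x] by (simp add: aF_def)
next
  fix p I assume p: "p \<in> Ridx T" and IK: "I \<subseteq> Ridx T"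
    and low: "\<And>j. j \<in> Ridx T \<Longrightarrow> rk T j < rk T p \<Longrightarrow> j \<in> I"
  obtain i k where pik: "p = (i,k)" by (cases p)
  have ik: "2 \<le> i" "i \<le> T" "1 \<le> k" "k < i" using p by (auto simp: pik Ridx_def)
  have a1: "(k,l) \<in> I" if "l \<in> {1..k-1}" for l
    using that ik by (intro low) (auto simp: Ridx_def pik intro!: rk_less[OF p[unfolded pik]])
  have a2: "(i,l) \<in> I" if "l \<in> {1..k-1}" for l
    using that ik by (intro low) (auto simp: Ridx_def pik rk_def)
  have m1: "dt k \<in> borel_measurable (LB I)" by (rule dt_meas[OF a1])
  have m2: "(\<lambda>x. \<Sum>l=1..k-1. x (k,l) * x (i,l)) \<in> borel_measurable (LB I)"
    by (intro borel_measurable_sum borel_measurable_times comp_meas a1 a2)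
  show "aF \<gamma> p \<in> borel_measurable (LB I) \<and> hF \<gamma> p \<in> borel_measurable (LB I)"
    using m1 m2 unfolding aF_def hF_def pik by simp
qed

lemma Qset_alt: "Qset T \<gamma> = space (LB (Pidx T)) \<inter> {q. \<forall>v. quad T (Sigma_mat q) v \<ge> (1 - \<gamma>) * (\<Sum>j=1..T. (v j)^2)}"
  by (auto simp: Qset_def quad_def space_PiM)

lemma Qset_sets: "Qset T \<gamma> \<in> sets (LB (Pidx T))"
proof -
  define Q' where "Q' = {q :: nat \<times> nat \<Rightarrow> real. \<forall>v. quad T (Sigma_mat q) v \<ge> (1 - \<gamma>) * (\<Sum>j=1..T. (v j)^2)}"
  have cS: "continuous_on UNIV (\<lambda>q :: nat \<times> nat \<Rightarrow> real. Sigma_mat q j k)" for j k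
    unfolding Sigma_mat_def
    by (cases "j = k"; cases "j < k") (simp_all add: continuous_on_const)
  have "closed Q'"
    unfolding Q'_def quad_def
    by (intro closed_Collect_all closed_Collect_le continuous_on_const continuous_on_sum continuous_on_mult cS)
  then have Q'b: "Q' \<in> sets borel" by (rule borel_closed)
  have idm: "(\<lambda>q. q) \<in> measurable (LB (Pidx T)) (borel :: (nat \<times> nat \<Rightarrow> real) measure)"
  proof (rule measurable_coordinatewise_then_product)
    fix p :: "nat \<times> nat"
    show "(\<lambda>x. x p) \<in> borel_measurable (LB (Pidx T))"
    proof (cases "p \<in> Pidx T")
      case True then show ?thesis by (rule comp_meas)
    next
      case False
      have "(\<lambda>x. undefined) \<in> borel_measurable (LB (Pidx T))" by simp
      then show ?thesis
        by (rule measurable_cong[THEN iffD1, rotated]) (use False in \<open>auto simp: space_PiM PiE_def extensional_def, metis prod.collapse\<close>)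
    qed
  qed
  have "(\<lambda>q. q) -` Q' \<inter> space (LB (Pidx T)) \<in> sets (LB (Pidx T))"
    by (rule measurable_sets[OF idm Q'b])
  moreover have "(\<lambda>q. q) -` Q' \<inter> space (LB (Pidx T)) = Qset T \<gamma>"
    unfolding Qset_alt Q'_def by auto
  ultimately show ?thesis by simp
qed

lemma Q_iff:
  assumes y: "y \<in> space (LB (Ridx T))"
  shows "swp T y \<in> Qset T \<gamma> \<longleftrightarrow> (\<forall>v. quad T (Gm \<gamma> y) v \<ge> 0)"
proof -
  have sp: "swp T y \<in> space (LB (Pidx T))" by (simp add: swp_def space_PiM)
  have "quad T (Sigma_mat (swp T y)) v = quad T (\<lambda>j k. 1 * Gm \<gamma> y j k + (if j = k then 1 - \<gamma> else 0)) v" for v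
    unfolding quad_def
    by (intro sum.cong refl) (auto simp: Sigma_mat_def Gm_def swp_def Pidx_def)
  then have "quad T (Sigma_mat (swp T y)) v = quad T (Gm \<gamma> y) v + (1 - \<gamma>) * (\<Sum>j=1..T. (v j)^2)" for v
    using quad_split[of T 1 "Gm \<gamma> y" "1 - \<gamma>" v] by simp
  then show ?thesis using sp unfolding Qset_alt by auto
qed

lemma Kset_eq: "Kset T \<gamma> = swp T -` Qset T \<gamma> \<inter> space (LB (Ridx T))"
  using Q_iff by (auto simp: Kset_def)

lemma Kset_sets: "Kset T \<gamma> \<in> sets (LB (Ridx T))"
  unfolding Kset_eq by (rule measurable_sets[OF swp_meas Qset_sets])

lemma quad_two:
  assumes "k \<in> {1..T}" "i \<in> {1..T}" "k \<noteq> i"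
  shows "quad T G (\<lambda>j. if j = k then 1 else if j = i then s else 0) = G k k + s * G k i + s * G i k + s * s * G i i"
proof -
  define v where "v = (\<lambda>j. if j = k then 1 else if j = i then s else (0::real))"
  have sub: "{k,i} \<subseteq> {1..T}" using assms by auto
  have "quad T G v = (\<Sum>j\<in>{k,i}. \<Sum>l=1..T. v j * G j l * v l)"
    unfolding quad_def using sub by (intro sum.mono_neutral_right) (auto simp: v_def)
  also have "\<dots> = (\<Sum>j\<in>{k,i}. \<Sum>l\<in>{k,i}. v j * G j l * v l)"
    using sub by (intro sum.cong refl sum.mono_neutral_right) (auto simp: v_def)
  also have "\<dots> = G k k + s * G k i + s * G i k + s * s * G i i"
    using assms by (simp add: v_def algebra_simps)
  finally show ?thesis by (simp add: v_def)
qed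

lemma Kset_bound:
  assumes y: "y \<in> Kset T \<gamma>" and p: "p \<in> Ridx T"
  shows "\<bar>y p\<bar> \<le> \<gamma>"
proof -
  obtain i k where pik: "p = (i,k)" by (cases p)
  have ik: "k \<in> {1..T}" "i \<in> {1..T}" "k < i" using p by (auto simp: pik Ridx_def)
  have q: "quad T (Gm \<gamma> y) v \<ge> 0" for v using y by (auto simp: Kset_def)
  have "0 \<le> 2 * \<gamma> + 2 * s * y (i,k)" if "s * s = 1" for s
    using q[of "\<lambda>j. if j = k then 1 else if j = i then s else 0"] quad_two[OF ik(1,2), of "Gm \<gamma> y" s] ik that
    by (simp add: Gm_def algebra_simps)
  from this[of 1] this[of "-1"] show ?thesis by (simp add: pik abs_le_iff)
qed

lemma Kset_finite: "emeasure (LB (Ridx T)) (Kset T \<gamma>) < \<infinity>"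
proof -
  have "Kset T \<gamma> \<subseteq> Pi\<^sub>E (Ridx T) (\<lambda>_. {-\<gamma>..\<gamma>})"
  proof
    fix y assume y: "y \<in> Kset T \<gamma>"
    then have "y \<in> extensional (Ridx T)" by (auto simp: Kset_def space_PiM PiE_iff)
    moreover have "\<forall>p\<in>Ridx T. y p \<in> {-\<gamma>..\<gamma>}" using Kset_bound[OF y] by (force simp: abs_le_iff)
    ultimately show "y \<in> Pi\<^sub>E (Ridx T) (\<lambda>_. {-\<gamma>..\<gamma>})" by (simp add: PiE_iff)
  qed
  then have "emeasure (LB (Ridx T)) (Kset T \<gamma>) \<le> emeasure (LB (Ridx T)) (Pi\<^sub>E (Ridx T) (\<lambda>_. {-\<gamma>..\<gamma>}))"
    by (intro emeasure_mono) (auto intro!: sets_PiM_I_finite finite_Ridx)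
  also have "\<dots> = (\<Prod>p\<in>Ridx T. emeasure lborel {-\<gamma>..\<gamma>})"
    by (intro product_sigma_finite.emeasure_PiM finite_Ridx)
      (auto simp: product_sigma_finite_def lborel.sigma_finite_measure_axioms)
  also have "\<dots> < \<infinity>" by (simp add: less_top[symmetric] emeasure_lborel_Icc_eq power_eq_top_ennreal)
  finally show ?thesis .
qed

lemma aF_hF_meas:
  assumes p: "p \<in> Ridx T"
  shows "aF \<gamma> p \<in> borel_measurable (LB (Ridx T))" "hF \<gamma> p \<in> borel_measurable (LB (Ridx T))"
proof -
  obtain i k where pik: "p = (i,k)" by (cases p)
  have ik: "2 \<le> i" "i \<le> T" "1 \<le> k" "k < i" using p by (auto simp: pik Ridx_def)
  have a1: "(k,l) \<in> Ridx T" if "l \<in> {1..k-1}" for l using that ik by (auto simp: Ridx_def)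
  have a2: "(i,l) \<in> Ridx T" if "l \<in> {1..k-1}" for l using that ik by (auto simp: Ridx_def)
  have m1: "dt k \<in> borel_measurable (LB (Ridx T))" by (rule dt_meas[OF a1])
  have m2: "(\<lambda>x. \<Sum>l=1..k-1. x (k,l) * x (i,l)) \<in> borel_measurable (LB (Ridx T))"
    by (intro borel_measurable_sum borel_measurable_times comp_meas a1 a2)
  show "aF \<gamma> p \<in> borel_measurable (LB (Ridx T))" "hF \<gamma> p \<in> borel_measurable (LB (Ridx T))"
    using m1 m2 unfolding aF_def hF_def pik by simp_all
qed

lemma PhiF_meas: "PhiF T \<gamma> \<in> measurable (LB (Ridx T)) (LB (Ridx T))"
  unfolding PhiF_def
  by (rule measurable_restrict) (simp add: aF_hF_meas comp_meas borel_measurable_add borel_measurable_times)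

lemma J_meas: "(\<lambda>r. ennreal (\<Prod>p\<in>Ridx T. \<bar>aF \<gamma> p r\<bar>)) \<in> borel_measurable (LB (Ridx T))"
  by (intro measurable_compose[OF _ measurable_ennreal] borel_measurable_prod borel_measurable_abs aF_hF_meas)

lemma scale_Kset:
  fixes T :: nat and \<gamma> t :: real
  assumes t: "t > 0"
  defines "Kt \<equiv> {y \<in> space (LB (Ridx T)). (\<lambda>p\<in>Ridx T. y p / t) \<in> Kset T \<gamma>}"
  shows "Kt \<in> sets (LB (Ridx T))"
    and "emeasure (LB (Ridx T)) Kt = ennreal (t ^ card (Ridx T)) * emeasure (LB (Ridx T)) (Kset T \<gamma>)"
proof -
  have sm: "(\<lambda>y. \<lambda>p\<in>Ridx T. y p / t) \<in> measurable (LB (Ridx T)) (LB (Ridx T))"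
    by (rule measurable_restrict) (simp add: comp_meas borel_measurable_divide)
  have "Kt = (\<lambda>y. \<lambda>p\<in>Ridx T. y p / t) -` Kset T \<gamma> \<inter> space (LB (Ridx T))"
    unfolding Kt_def by auto
  then show Ktm: "Kt \<in> sets (LB (Ridx T))"
    using measurable_sets[OF sm Kset_sets] by simp
  have "(\<integral>\<^sup>+x. indicator Kt (\<lambda>p\<in>Ridx T. t * x p + 0) * ennreal (\<Prod>p\<in>Ridx T. \<bar>t\<bar>) \<partial>LB (Ridx T))
     = integral\<^sup>N (LB (Ridx T)) (indicator Kt)"
    by (rule tri[OF finite_Ridx rk_inj]) (use t Ktm in auto)
  also have "\<dots> = emeasure (LB (Ridx T)) Kt" using Ktm by simp
  finally have e: "emeasure (LB (Ridx T)) Kt = (\<integral>\<^sup>+x. indicator Kt (\<lambda>p\<in>Ridx T. t * x p + 0) * ennreal (\<Prod>p\<in>Ridx T. \<bar>t\<bar>) \<partial>LB (Ridx T))" ..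
  also have "\<dots> = (\<integral>\<^sup>+x. ennreal (t ^ card (Ridx T)) * indicator (Kset T \<gamma>) x \<partial>LB (Ridx T))"
  proof (rule nn_integral_cong)
    fix x assume x: "x \<in> space (LB (Ridx T))"
    have r: "(\<lambda>p\<in>Ridx T. (\<lambda>p\<in>Ridx T. t * x p + 0) p / t) = x"
      using x t by (auto simp: space_PiM PiE_def extensional_def fun_eq_iff)
    have "(\<lambda>p\<in>Ridx T. t * x p + 0) \<in> space (LB (Ridx T))" by (simp add: space_PiM)
    then have "indicator Kt (\<lambda>p\<in>Ridx T. t * x p + 0) = (indicator (Kset T \<gamma>) x :: ennreal)"
      unfolding Kt_def using r by (simp add: indicator_def)
    then show "indicator Kt (\<lambda>p\<in>Ridx T. t * x p + 0) * ennreal (\<Prod>p\<in>Ridx T. \<bar>t\<bar>)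
       = ennreal (t ^ card (Ridx T)) * indicator (Kset T \<gamma>) x"
      using t by (simp add: mult.commute)
  qed
  also have "\<dots> = ennreal (t ^ card (Ridx T)) * emeasure (LB (Ridx T)) (Kset T \<gamma>)"
    using Kset_sets by (simp add: nn_integral_cmult_indicator)
  finally show "emeasure (LB (Ridx T)) Kt = ennreal (t ^ card (Ridx T)) * emeasure (LB (Ridx T)) (Kset T \<gamma>)" .
qed

lemma comp_meas_any[measurable]: "(\<lambda>x. x j) \<in> borel_measurable (LB I)"
proof (cases "j \<in> I")
  case True then show ?thesis by (rule comp_meas)
next
  case False
  have "(\<lambda>x. undefined) \<in> borel_measurable (LB I)" by simp
  then show ?thesis
    by (rule measurable_cong[THEN iffD1, rotated]) (use False in \<open>auto simp: space_PiM PiE_def extensional_def\<close>)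
qed

lemma sR_meas_any[measurable]: "sR k \<in> borel_measurable (LB I)"
  unfolding sR_def by measurable

lemma Dp_sets: "{r \<in> space (LB (Ridx T)). r \<in> Dp T} \<in> sets (LB (Ridx T))"
  unfolding Dp_def by measurable

lemma sandwich:
  fixes T :: nat and \<gamma> :: real
  assumes g: "\<gamma> > 0" and T: "2 \<le> T"
  shows "AE r in LB (Ridx T). indicator (Dp T) r * ennreal (\<Prod>p\<in>Ridx T. \<bar>aF \<gamma> p r\<bar>)
      = indicator (Kset T \<gamma>) (PhiF T \<gamma> r) * ennreal (\<Prod>p\<in>Ridx T. \<bar>aF \<gamma> p r\<bar>)"
proof -
  define L where "L = LB (Ridx T)"
  define J where "J r = ennreal (\<Prod>p\<in>Ridx T. \<bar>aF \<gamma> p r\<bar>)" for r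
  define D where "D = {r \<in> space L. r \<in> Dp T}"
  define K where "K = Kset T \<gamma>"
  define N where "N = card (Ridx T)"
  have Dm: "D \<in> sets L" unfolding D_def L_def by (rule Dp_sets)
  have Km: "K \<in> sets L" unfolding K_def L_def by (rule Kset_sets)
  have Jm: "J \<in> borel_measurable L" unfolding J_def L_def by (rule J_meas)
  have Phim: "PhiF T \<gamma> \<in> measurable L L" unfolding L_def by (rule PhiF_meas)
  have ind: "indicator (Dp T) r = (indicator D r :: ennreal)" if "r \<in> space L" for r
    using that by (simp add: D_def indicator_def)
  have le1: "indicator D r * J r \<le> indicator K (PhiF T \<gamma> r) * J r" if r: "r \<in> space L" for r
  proof (cases "r \<in> D")
    case True
    then have "r \<in> Dp T" by (simp add: D_def)
    then have "PhiF T \<gamma> r \<in> K"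
      using psd_of_Dp[of r T \<gamma>] g by (auto simp: K_def Kset_def PhiF_def space_PiM)
    then show ?thesis using True by simp
  qed simp
  have IK: "(\<integral>\<^sup>+r. indicator K (PhiF T \<gamma> r) * J r \<partial>L) = emeasure L K"
    unfolding L_def J_def using Phi_integral[OF g, of "indicator K" T] Km unfolding L_def by simp
  define B where "B = (\<integral>\<^sup>+r. indicator D r * J r \<partial>L)"
  have BK: "B \<le> emeasure L K"
    unfolding B_def IK[symmetric] using le1 by (intro nn_integral_mono) auto
  have lower: "ennreal (t ^ N) * emeasure L K \<le> B" if t: "0 < t" "t < 1" for t
  proof -
    define Kt where "Kt = {y \<in> space (LB (Ridx T)). (\<lambda>p\<in>Ridx T. y p / t) \<in> Kset T \<gamma>}"
    have Ktm: "Kt \<in> sets L" and eKt: "emeasure L Kt = ennreal (t ^ N) * emeasure L K"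
      using scale_Kset[OF t(1), of T \<gamma>] unfolding Kt_def L_def K_def N_def by auto
    have "emeasure L Kt = (\<integral>\<^sup>+r. indicator Kt (PhiF T \<gamma> r) * J r \<partial>L)"
      unfolding L_def J_def using Phi_integral[OF g, of "indicator Kt" T] Ktm unfolding L_def by simp
    also have "\<dots> \<le> B"
      unfolding B_def
    proof (intro nn_integral_mono)
      fix r assume r: "r \<in> space L"
      show "indicator Kt (PhiF T \<gamma> r) * J r \<le> indicator D r * J r"
      proof (cases "PhiF T \<gamma> r \<in> Kt")
        case True
        then have "\<forall>v. quad T (Gm \<gamma> (\<lambda>p\<in>Ridx T. PhiF T \<gamma> r p / t)) v \<ge> 0"
          by (auto simp: Kt_def Kset_def)
        then have "\<forall>i\<in>{2..T}. sR i r < 1" using strict_D[OF g t] by blast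
        then have "r \<in> Dp T" using T by (auto simp: Dp_def intro: less_imp_le)
        then show ?thesis using r True by (simp add: D_def)
      qed simp
    qed
    finally show ?thesis using eKt by simp
  qed
  have Kfin: "emeasure L K < \<infinity>" unfolding L_def K_def by (rule Kset_finite)
  have KB: "emeasure L K \<le> B"
  proof (rule ccontr)
    assume "\<not> emeasure L K \<le> B"
    then have BK': "B < emeasure L K" by simp
    obtain \<kappa> where \<kappa>: "emeasure L K = ennreal \<kappa>" "\<kappa> \<ge> 0" using Kfin by (cases "emeasure L K") auto
    obtain \<beta> where \<beta>: "B = ennreal \<beta>" "\<beta> \<ge> 0" using BK' Kfin by (cases B) auto
    have "\<beta> < \<kappa>" using BK' \<kappa> \<beta> by (simp add: ennreal_less_iff)
    have lim: "((\<lambda>t. t ^ N * \<kappa>) \<longlongrightarrow> 1 ^ N * \<kappa>) (at_left (1::real))"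
      by (intro tendsto_intros)
    have ev1: "eventually (\<lambda>t. \<beta> < t ^ N * \<kappa>) (at_left (1::real))"
      using order_tendstoD(1)[OF lim] \<open>\<beta> < \<kappa>\<close> by simp
    have ev2: "eventually (\<lambda>t. t \<in> {0<..<1}) (at_left (1::real))"
      by (rule eventually_at_left_real) simp
    obtain t where tt: "\<beta> < t ^ N * \<kappa>" "t \<in> {0<..<1}"
      using eventually_happens'[OF trivial_limit_at_left_real eventually_conj[OF ev1 ev2]] by blast
    have "ennreal (t ^ N) * emeasure L K \<le> B" using lower tt by auto
    then have "t ^ N * \<kappa> \<le> \<beta>" using \<kappa> \<beta> tt by (simp add: ennreal_mult[symmetric])
    then show False using tt by simp
  qed
  have BeqK: "B = emeasure L K" using BK KB by simp
  have diff: "(\<integral>\<^sup>+r. indicator K (PhiF T \<gamma> r) * J r - indicator D r * J r \<partial>L) = 0"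
  proof -
    have "(\<integral>\<^sup>+r. indicator K (PhiF T \<gamma> r) * J r - indicator D r * J r \<partial>L)
        = (\<integral>\<^sup>+r. indicator K (PhiF T \<gamma> r) * J r \<partial>L) - B"
      unfolding B_def
      by (rule nn_integral_diff) (use Km Dm Jm Phim le1 BeqK Kfin B_def in \<open>auto intro!: AE_I2\<close>)
    then show ?thesis using IK BeqK Kfin by (simp add: diff_eq_0_iff_ennreal)
  qed
  have "AE r in L. indicator K (PhiF T \<gamma> r) * J r - indicator D r * J r = 0"
    using diff Km Dm Jm Phim by (subst nn_integral_0_iff_AE[symmetric]) auto
  then have "AE r in L. indicator D r * J r = indicator K (PhiF T \<gamma> r) * J r"
  proof (rule AE_mp, intro AE_I2 impI)
    fix r assume r: "r \<in> space L" and z: "indicator K (PhiF T \<gamma> r) * J r - indicator D r * J r = 0"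
    then show "indicator D r * J r = indicator K (PhiF T \<gamma> r) * J r"
      using le1[OF r] by (auto simp: diff_eq_0_iff_ennreal)
  qed
  then have "AE r in L. indicator (Dp T) r * J r = indicator K (PhiF T \<gamma> r) * J r"
    by (rule AE_mp) (auto intro!: AE_I2 simp: ind)
  then show ?thesis unfolding L_def J_def K_def .
qed


lemma prodpow: "(\<Prod>i=2..m. \<Prod>k=1..i-1. g k) = (\<Prod>k=1..m. (g k :: real) ^ (m - k))"
proof (induction m)
  case 0 then show ?case by simp
next
  case (Suc m)
  have L: "(\<Prod>i=2..Suc m. \<Prod>k=1..i-1. g k) = (\<Prod>i=2..m. \<Prod>k=1..i-1. g k) * (\<Prod>k=1..m. g k)"
  proof (cases m)
    case 0 then show ?thesis by simp
  next
    case (Suc m') then show ?thesis by (simp add: prod.cl_ivl_Suc)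
  qed
  have R: "(\<Prod>k=1..Suc m. g k ^ (Suc m - k)) = (\<Prod>k=1..m. g k ^ (m - k)) * (\<Prod>k=1..m. g k)"
  proof -
    have "(\<Prod>k=1..Suc m. g k ^ (Suc m - k)) = (\<Prod>k=1..m. g k ^ (Suc m - k))"
      by (simp add: prod.cl_ivl_Suc)
    also have "\<dots> = (\<Prod>k=1..m. g k ^ (m - k) * g k)"
      by (intro prod.cong refl) (simp add: Suc_diff_le power_Suc mult.commute)
    finally show ?thesis by (simp add: prod.distrib)
  qed
  show ?case using L R Suc.IH by simp
qed

lemma Ridx_Sigma: "Ridx T = Sigma {2..T} (\<lambda>i. {1..i-1})"
  by (auto simp: Ridx_def)

lemma prod_Ridx: "(\<Prod>p\<in>Ridx T. g (snd p)) = (\<Prod>k=1..T. (g k :: real) ^ (T - k))"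
proof -
  have "(\<Prod>p\<in>Ridx T. g (snd p)) = (\<Prod>i=2..T. \<Prod>k=1..i-1. g k)"
    unfolding Ridx_Sigma by (subst prod.Sigma) (auto simp: case_prod_beta')
  then show ?thesis using prodpow[of g T] by simp
qed

lemma rdens_eq:
  assumes T: "2 \<le> T"
  shows "rdens T r = (if r \<in> Dp T then (\<Prod>p\<in>Ridx T. dt (snd p) r) else 0)"
proof -
  have rd: "rdens T r = (\<Prod>i=2..T. sqrt ((1 - sR i r) ^ (T - i)) * indicator {..1} (sqrt (sR i r)))"
    by (simp add: rdens_def sR_def Let_def)
  show ?thesis
  proof (cases "r \<in> Dp T")
    case True
    have "rdens T r = (\<Prod>i=2..T. dt i r ^ (T - i))"
      unfolding rd
    proof (intro prod.cong refl)
      fix i assume i: "i \<in> {2..T}"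
      have le: "sR i r \<le> 1" using Dp_sR_le[OF True, of i] i by auto
      have ind: "indicator {..1} (sqrt (sR i r)) = (1::real)" using le by (simp add: indicator_def)
      show "sqrt ((1 - sR i r) ^ (T - i)) * indicator {..1} (sqrt (sR i r)) = dt i r ^ (T - i)"
      proof (cases "i = T")
        case True then show ?thesis using ind by simp
      next
        case False
        then have "sR i r < 1" using Dp_sR_lt[OF \<open>r \<in> Dp T\<close>, of i] i by auto
        then show ?thesis using ind by (simp add: dt_def real_sqrt_power)
      qed
    qed
    also have "\<dots> = (\<Prod>i=1..T. dt i r ^ (T - i))"
    proof -
      have "(\<Prod>i=1..T. dt i r ^ (T - i)) = dt 1 r ^ (T - 1) * (\<Prod>i=Suc 1..T. dt i r ^ (T - i))"
        using T by (subst prod.atLeast_Suc_atMost) auto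
      then show ?thesis by (simp add: dt_def numeral_2_eq_2)
    qed
    also have "\<dots> = (\<Prod>p\<in>Ridx T. dt (snd p) r)" using prod_Ridx[of "\<lambda>k. dt k r" T] by simp
    finally show ?thesis using True by simp
  next
    case False
    then obtain i where i: "i \<in> {2..T}" and bad: "(i < T \<and> sR i r \<ge> 1) \<or> (i = T \<and> sR i r > 1)"
    proof -
      have "\<not> ((\<forall>i\<in>{2..T-1}. sR i r < 1) \<and> sR T r \<le> 1)" using False by (simp add: Dp_def)
      then consider i where "i \<in> {2..T-1}" "sR i r \<ge> 1" | "sR T r > 1" by force
      then show ?thesis
      proof cases
        case (1 i)
        then have "i \<in> {2..T}" "i < T" using T by auto
        then show ?thesis using that[of i] 1 by auto
      next
        case 2 then show ?thesis using that[of T] T by auto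
      qed
    qed
    have "sqrt ((1 - sR i r) ^ (T - i)) * indicator {..1} (sqrt (sR i r)) = (0::real)"
    proof (cases "sR i r > 1")
      case True then show ?thesis by (simp add: indicator_def)
    next
      case False
      then have "sR i r = 1" "i < T" using bad by auto
      then show ?thesis by simp
    qed
    then have "rdens T r = 0" unfolding rd using i by (intro prod_zero) auto
    then show ?thesis using False by simp
  qed
qed

definition Psi :: "nat \<Rightarrow> real \<Rightarrow> (nat \<times> nat \<Rightarrow> real) \<Rightarrow> (nat \<times> nat \<Rightarrow> real)" where
  "Psi T \<gamma> r = (\<lambda>p\<in>Ridx T. \<gamma> * (sqrt (1 - sR (snd p) r) * r p + (\<Sum>l=1..snd p - 1. r (snd p, l) * r (fst p, l))))"

lemma Psi_Phi: "r \<in> Dp T \<Longrightarrow> Psi T \<gamma> r = PhiF T \<gamma> r"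
  unfolding Psi_def PhiF_def
proof (intro restrict_ext)
  fix p assume r: "r \<in> Dp T" and p: "p \<in> Ridx T"
  have "sR (snd p) r < 1" using p by (intro Dp_sR_lt[OF r]) (auto simp: Ridx_def)
  then show "\<gamma> * (sqrt (1 - sR (snd p) r) * r p + (\<Sum>l=1..snd p - 1. r (snd p, l) * r (fst p, l)))
     = aF \<gamma> p r * r p + hF \<gamma> p r"
    by (simp add: aF_def hF_def dt_def algebra_simps)
qed

lemma Psi_meas: "Psi T \<gamma> \<in> measurable (LB (Ridx T)) (LB (Ridx T))"
  unfolding Psi_def by (rule measurable_restrict) measurable

lemma rho_eq:
  assumes snr: "snr > 0" and g: "\<gamma> = snr / (1 + snr)" and nt: "T \<le> nt"
    and X: "X \<in> Xtilde snr nt T"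
  shows "rho nt T X = swp T (Psi T \<gamma> (rvec snr T X))"
  unfolding rho_def swp_def
proof (intro restrict_ext)
  fix p assume p: "p \<in> Pidx T"
  obtain j k where pjk: "p = (j,k)" by (cases p)
  have jk: "1 \<le> j" "j < k" "k \<le> T" using p by (auto simp: pjk Pidx_def)
  define r where "r = rvec snr T X"
  define \<sigma> where "\<sigma> = sqrt snr"
  have \<sigma>: "\<sigma> > 0" "\<sigma> * \<sigma> = snr" using snr by (auto simp: \<sigma>_def)
  have col: "col_sqnorm nt X i = snr" if "i \<in> {1..T}" for i
  proof -
    have "sqrt (col_sqnorm nt X i) = sqrt snr" using X that by (auto simp: Xtilde_def)
    then show ?thesis by simp
  qed
  have low: "X l i = 0" if "i \<in> {1..T}" "i < l" "l \<le> nt" for l i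
    using X that by (auto simp: Xtilde_def)
  have dnn: "X i i \<ge> 0" if "i \<in> {1..T}" for i using X that by (auto simp: Xtilde_def)
  have rv: "r (a,b) = X b a / \<sigma>" if "(a,b) \<in> Ridx T" for a b
    using that by (simp add: r_def rvec_def \<sigma>_def)
  have sRj: "sR j r = (\<Sum>l=1..j-1. (X l j)^2) / snr"
  proof -
    have "sR j r = (\<Sum>l=1..j-1. (X l j / \<sigma>)^2)"
      unfolding sR_def
    proof (intro sum.cong refl)
      fix l assume "l \<in> {1..j-1}"
      then have "(j,l) \<in> Ridx T" using jk by (auto simp: Ridx_def)
      then show "(r (j,l))^2 = (X l j / \<sigma>)^2" by (simp add: rv)
    qed
    also have "\<dots> = (\<Sum>l=1..j-1. (X l j)^2) / snr"
      using \<sigma> by (simp add: power_divide sum_divide_distrib power2_eq_square)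
    finally show ?thesis .
  qed
  have cj: "snr = (\<Sum>l=1..j-1. (X l j)^2) + (X j j)^2"
  proof -
    have "col_sqnorm nt X j = (\<Sum>l=1..j-1. (X l j)^2) + (X j j)^2"
      unfolding col_sqnorm_def using jk nt by (intro sum_upto_last) (auto intro: low)
    then show ?thesis using col[of j] jk by simp
  qed
  have Xjj: "X j j = \<sigma> * sqrt (1 - sR j r)"
  proof -
    have "(X j j)^2 = snr * (1 - sR j r)" using cj sRj snr by (simp add: field_simps)
    moreover have dj: "X j j \<ge> 0" using dnn jk by auto
    ultimately have "sqrt (snr * (1 - sR j r)) = X j j" by (intro real_sqrt_unique)
    then have "X j j = sqrt (snr * (1 - sR j r))" by simp
    then show ?thesis by (simp add: \<sigma>_def real_sqrt_mult)
  qed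
  have num: "(\<Sum>l=1..nt. X l j * X l k) = (\<Sum>l=1..j-1. X l j * X l k) + X j j * X j k"
    using jk nt by (intro sum_upto_last) (auto intro: low)
  have sumr: "(\<Sum>l=1..j-1. r (j,l) * r (k,l)) = (\<Sum>l=1..j-1. X l j * X l k) / snr"
  proof -
    have "(\<Sum>l=1..j-1. r (j,l) * r (k,l)) = (\<Sum>l=1..j-1. (X l j / \<sigma>) * (X l k / \<sigma>))"
    proof (intro sum.cong refl)
      fix l assume "l \<in> {1..j-1}"
      then have "(j,l) \<in> Ridx T" "(k,l) \<in> Ridx T" using jk by (auto simp: Ridx_def)
      then show "r (j,l) * r (k,l) = (X l j / \<sigma>) * (X l k / \<sigma>)" by (simp add: rv)
    qed
    also have "\<dots> = (\<Sum>l=1..j-1. X l j * X l k) / snr"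
      using \<sigma> by (simp add: sum_divide_distrib)
    finally show ?thesis .
  qed
  have den: "sqrt ((1 + (sqrt (col_sqnorm nt X j))^2) * (1 + (sqrt (col_sqnorm nt X k))^2)) = 1 + snr"
    using col[of j] col[of k] jk snr by (simp add: power2_eq_square[symmetric])
  have R: "(k,j) \<in> Ridx T" using jk by (auto simp: Ridx_def)
  have "Psi T \<gamma> r (k,j) = \<gamma> * (sqrt (1 - sR j r) * r (k,j) + (\<Sum>l=1..j-1. r (j,l) * r (k,l)))"
    using R by (simp add: Psi_def)
  also have "\<dots> = \<gamma> * (sqrt (1 - sR j r) * (X j k / \<sigma>) + (\<Sum>l=1..j-1. X l j * X l k) / snr)"
    by (simp only: sumr rv[OF R])
  also have "\<dots> = ((\<Sum>l=1..j-1. X l j * X l k) + X j j * X j k) / (1 + snr)"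
  proof -
    have gen: "(\<sigma> * \<sigma>) / (1 + \<sigma> * \<sigma>) * (a * (b / \<sigma>) + c / (\<sigma> * \<sigma>)) = (c + \<sigma> * a * b) / (1 + \<sigma> * \<sigma>)" for a b c
    proof -
      have e1: "\<sigma> * \<sigma> * (a * (b / \<sigma>) + c / (\<sigma> * \<sigma>)) = c + \<sigma> * a * b"
        using \<sigma>(1) by (simp add: field_simps)
      have "(\<sigma> * \<sigma>) / (1 + \<sigma> * \<sigma>) * (a * (b / \<sigma>) + c / (\<sigma> * \<sigma>))
          = (\<sigma> * \<sigma> * (a * (b / \<sigma>) + c / (\<sigma> * \<sigma>))) / (1 + \<sigma> * \<sigma>)" by simp
      then show ?thesis unfolding e1 .
    qed
    show ?thesis unfolding g Xjj \<sigma>(2)[symmetric] by (rule gen)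
  qed
  finally show "(case p of (j, k) \<Rightarrow> rho_entry nt X j k) = Psi T \<gamma> (rvec snr T X) (snd p, fst p)"
    unfolding rho_entry_def pjk using num den
    by (simp add: r_def)
qed


lemma rdens_meas: "(\<lambda>r. rdens T r) \<in> borel_measurable (LB (Ridx T))"
  unfolding rdens_def Let_def by measurable

theorem lemma7:
  fixes T nt :: nat and snr \<gamma> :: real
    and M :: "'a measure" and X :: "'a \<Rightarrow> nat \<Rightarrow> nat \<Rightarrow> real"
  assumes "T \<ge> 2" and "nt \<ge> T" and "snr > 0" and "\<gamma> = snr / (1 + snr)"
    and "prob_space M"
    and "\<forall>\<omega>\<in>space M. X \<omega> \<in> Xtilde snr nt T"
    and "(\<lambda>\<omega>. rvec snr T (X \<omega>)) \<in> measurable M (PiM (Ridx T) (\<lambda>_. lborel))"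
    and "\<exists>c::real. distr M (PiM (Ridx T) (\<lambda>_. lborel)) (\<lambda>\<omega>. rvec snr T (X \<omega>))
           = density (PiM (Ridx T) (\<lambda>_. lborel)) (\<lambda>r. ennreal (c * rdens T r))"
  shows "distr M (PiM (Pidx T) (\<lambda>_. lborel)) (\<lambda>\<omega>. rho nt T (X \<omega>))
           = uniform_measure (PiM (Pidx T) (\<lambda>_. lborel)) (Qset T \<gamma>)"
proof -
  note T2 = assms(1) and nt = assms(2) and snr = assms(3) and g = assms(4)
    and prob = assms(5) and Xin = assms(6) and Rvm = assms(7)
  obtain c :: real where dens: "distr M (LB (Ridx T)) (\<lambda>\<omega>. rvec snr T (X \<omega>))
           = density (LB (Ridx T)) (\<lambda>r. ennreal (c * rdens T r))" using assms(8) by blast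
  have gpos: "\<gamma> > 0" using snr g by simp
  define L where "L = LB (Ridx T)"
  define LP where "LP = LB (Pidx T)"
  define G where "G r = swp T (Psi T \<gamma> r)" for r
  define N where "N = card (Ridx T)"
  define c' where "c' = c / \<gamma> ^ N"
  define Q where "Q = Qset T \<gamma>"
  define K where "K = Kset T \<gamma>"
  define J where "J r = ennreal (\<Prod>p\<in>Ridx T. \<bar>aF \<gamma> p r\<bar>)" for r
  define f where "f = (\<lambda>r. ennreal (c * rdens T r))"
  define Rv where "Rv = (\<lambda>\<omega>. rvec snr T (X \<omega>))"
  have Gm: "G \<in> measurable L LP"
    unfolding G_def L_def LP_def using measurable_comp[OF Psi_meas swp_meas] by (simp add: comp_def)
  have Rvm': "Rv \<in> measurable M L" using Rvm by (simp add: Rv_def L_def)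
  have fm: "f \<in> borel_measurable L" unfolding f_def L_def using rdens_meas by measurable
  have Qm: "Q \<in> sets LP" unfolding Q_def LP_def by (rule Qset_sets)
  have Km: "K \<in> sets L" unfolding K_def L_def by (rule Kset_sets)
  have e1: "distr M LP (\<lambda>\<omega>. rho nt T (X \<omega>)) = distr M LP (\<lambda>\<omega>. G (Rv \<omega>))"
    by (rule distr_cong) (use Xin in \<open>auto simp: G_def Rv_def intro!: rho_eq[OF snr g nt]\<close>)
  have e2: "distr M LP (\<lambda>\<omega>. G (Rv \<omega>)) = distr (density L f) LP G"
    using distr_distr[OF Gm Rvm'] dens by (simp add: comp_def Rv_def L_def f_def)
  define \<nu> where "\<nu> = distr (density L f) LP G"
  have Phim: "PhiF T \<gamma> \<in> measurable L L" unfolding L_def by (rule PhiF_meas)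
  have Jm: "J \<in> borel_measurable L" unfolding J_def L_def by (rule J_meas)
  have swpm: "swp T \<in> measurable L LP" unfolding L_def LP_def by (rule swp_meas)
  have Jeq: "J r = ennreal (\<gamma> ^ N * (\<Prod>p\<in>Ridx T. dt (snd p) r))" for r
  proof -
    have "(\<Prod>p\<in>Ridx T. \<bar>aF \<gamma> p r\<bar>) = (\<Prod>p\<in>Ridx T. \<gamma> * dt (snd p) r)"
      using gpos dt_pos by (intro prod.cong refl) (simp add: aF_def abs_mult less_imp_le)
    also have "\<dots> = \<gamma> ^ N * (\<Prod>p\<in>Ridx T. dt (snd p) r)"
      by (simp add: prod.distrib N_def)
    finally show ?thesis by (simp add: J_def)
  qed
  have feq: "f r = ennreal c' * (indicator (Dp T) r * J r)" for r
  proof (cases "r \<in> Dp T")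
    case True
    define P where "P = (\<Prod>p\<in>Ridx T. dt (snd p) r)"
    have P: "P > 0" unfolding P_def using dt_pos by (intro prod_pos) auto
    have "c * rdens T r = c' * (\<gamma> ^ N * P)"
      using True gpos by (simp add: rdens_eq[OF T2] P_def c'_def)
    then have "f r = ennreal (c' * (\<gamma> ^ N * P))" by (simp add: f_def)
    also have "\<dots> = ennreal c' * ennreal (\<gamma> ^ N * P)"
      using P gpos by (intro ennreal_mult'') simp
    finally show ?thesis using True by (simp add: Jeq P_def)
  next
    case False
    then show ?thesis by (simp add: f_def rdens_eq[OF T2])
  qed
  have SW: "AE r in L. indicator (Dp T) r * J r = indicator K (PhiF T \<gamma> r) * J r"
    using sandwich[OF gpos T2] unfolding L_def J_def K_def .
  have main: "emeasure \<nu> A = ennreal c' * emeasure LP (Q \<inter> A)" if A: "A \<in> sets LP" for A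
  proof -
    have fKA: "(\<lambda>y. indicator K y * indicator A (swp T y) :: ennreal) \<in> borel_measurable L"
      using Km A swpm by measurable
    have pre: "G -` A \<inter> space L \<in> sets L" using measurable_sets[OF Gm A] .
    have "emeasure \<nu> A = emeasure (density L f) (G -` A \<inter> space L)"
      unfolding \<nu>_def by (subst emeasure_distr) (use Gm A in simp_all)
    also have "\<dots> = (\<integral>\<^sup>+r. f r * indicator (G -` A \<inter> space L) r \<partial>L)"
      by (rule emeasure_density[OF fm pre])
    also have "\<dots> = (\<integral>\<^sup>+r. ennreal c' * (indicator (Dp T) r * J r) * indicator A (swp T (PhiF T \<gamma> r)) \<partial>L)"
    proof (rule nn_integral_cong)
      fix r assume r: "r \<in> space L"
      show "f r * indicator (G -` A \<inter> space L) r = ennreal c' * (indicator (Dp T) r * J r) * indicator A (swp T (PhiF T \<gamma> r))"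
      proof (cases "r \<in> Dp T")
        case True
        then have "G r = swp T (PhiF T \<gamma> r)" by (simp add: G_def Psi_Phi)
        then show ?thesis using r by (simp add: feq indicator_def)
      qed (simp add: feq)
    qed
    also have "\<dots> = (\<integral>\<^sup>+r. ennreal c' * ((indicator K (PhiF T \<gamma> r) * indicator A (swp T (PhiF T \<gamma> r))) * J r) \<partial>L)"
    proof (rule nn_integral_cong_AE)
      show "AE r in L. ennreal c' * (indicator (Dp T) r * J r) * indicator A (swp T (PhiF T \<gamma> r))
          = ennreal c' * ((indicator K (PhiF T \<gamma> r) * indicator A (swp T (PhiF T \<gamma> r))) * J r)"
        using SW
      proof (rule AE_mp, intro AE_I2 impI)
        fix r assume eq: "indicator (Dp T) r * J r = indicator K (PhiF T \<gamma> r) * J r"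
        have "ennreal c' * (indicator (Dp T) r * J r) * indicator A (swp T (PhiF T \<gamma> r))
            = ennreal c' * (indicator K (PhiF T \<gamma> r) * J r) * indicator A (swp T (PhiF T \<gamma> r))"
          by (simp only: eq)
        then show "ennreal c' * (indicator (Dp T) r * J r) * indicator A (swp T (PhiF T \<gamma> r))
          = ennreal c' * ((indicator K (PhiF T \<gamma> r) * indicator A (swp T (PhiF T \<gamma> r))) * J r)"
          by (simp only: mult_ac)
      qed
    qed
    also have "\<dots> = ennreal c' * (\<integral>\<^sup>+r. (indicator K (PhiF T \<gamma> r) * indicator A (swp T (PhiF T \<gamma> r))) * J r \<partial>L)"
    proof (rule nn_integral_cmult)
      show "(\<lambda>r. (indicator K (PhiF T \<gamma> r) * indicator A (swp T (PhiF T \<gamma> r))) * J r) \<in> borel_measurable L"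
        using Phim Jm fKA by measurable
    qed
    also have "(\<integral>\<^sup>+r. (indicator K (PhiF T \<gamma> r) * indicator A (swp T (PhiF T \<gamma> r))) * J r \<partial>L)
        = (\<integral>\<^sup>+y. indicator K y * indicator A (swp T y) \<partial>L)"
      unfolding L_def J_def
      by (rule Phi_integral[OF gpos]) (use fKA in \<open>simp add: L_def\<close>)
    also have "\<dots> = (\<integral>\<^sup>+y. indicator (Q \<inter> A) (swp T y) \<partial>L)"
    proof (rule nn_integral_cong)
      fix y assume y: "y \<in> space L"
      have "y \<in> K \<longleftrightarrow> swp T y \<in> Q" using y by (simp add: K_def Q_def Kset_eq L_def)
      then show "indicator K y * indicator A (swp T y) = (indicator (Q \<inter> A) (swp T y) :: ennreal)"
        by (simp add: indicator_def)
    qed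
    also have "\<dots> = emeasure LP (Q \<inter> A)"
      unfolding L_def LP_def using swp_integral[of "indicator (Q \<inter> A)" T] Qm A
      by (simp add: LP_def sets.Int)
    finally show ?thesis .
  qed
  have tot: "emeasure \<nu> (space LP) = 1"
  proof -
    have "emeasure \<nu> (space LP) = emeasure M ((\<lambda>\<omega>. G (Rv \<omega>)) -` space LP \<inter> space M)"
      unfolding \<nu>_def e2[symmetric] by (rule emeasure_distr) (use Gm Rvm' in auto)
    also have "(\<lambda>\<omega>. G (Rv \<omega>)) -` space LP \<inter> space M = space M"
      using measurable_space[OF measurable_comp[OF Rvm' Gm]] by auto
    finally show ?thesis using prob_space.emeasure_space_1[OF prob] by simp
  qed
  have QLP: "Q \<inter> space LP = Q" using Qm sets.sets_into_space by blast
  have one: "ennreal c' * emeasure LP Q = 1" using main[of "space LP"] tot QLP by simp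
  obtain \<beta> where \<beta>: "emeasure LP Q = ennreal \<beta>" "\<beta> > 0" "c' * \<beta> = 1"
  proof (cases "emeasure LP Q" rule: ennreal_cases)
    case (real \<beta>)
    have c'0: "c' \<ge> 0"
    proof (rule ccontr)
      assume "\<not> c' \<ge> 0" then have "ennreal c' = 0" by (simp add: ennreal_neg)
      then show False using one by simp
    qed
    have "ennreal (c' * \<beta>) = 1" using one real c'0 by (simp add: ennreal_mult)
    then have cb: "c' * \<beta> = 1" using c'0 real by (simp add: ennreal_eq_1)
    then have "\<beta> > 0" using real by (cases "\<beta> = 0") auto
    then show ?thesis using that real cb by blast
  next
    case top then show ?thesis using one by (simp add: ennreal_mult_top split: if_splits)
  qed
  have "distr M LP (\<lambda>\<omega>. rho nt T (X \<omega>)) = uniform_measure LP Q"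
  proof (rule measure_eqI)
    show "sets (distr M LP (\<lambda>\<omega>. rho nt T (X \<omega>))) = sets (uniform_measure LP Q)" by simp
    fix A assume "A \<in> sets (distr M LP (\<lambda>\<omega>. rho nt T (X \<omega>)))"
    then have A: "A \<in> sets LP" by simp
    have "emeasure (uniform_measure LP Q) A = emeasure LP (Q \<inter> A) / ennreal \<beta>"
      using Qm A \<beta> by simp
    also have "\<dots> = ennreal c' * emeasure LP (Q \<inter> A)"
    proof -
      have "1 / \<beta> = c'" using \<beta>(2,3) by (simp add: field_simps)
      then show ?thesis using \<beta> by (simp add: divide_ennreal_def inverse_ennreal mult.commute inverse_eq_divide)
    qed
    also have "\<dots> = emeasure (distr M LP (\<lambda>\<omega>. rho nt T (X \<omega>))) A"
      using main[OF A] by (simp add: e1 e2 \<nu>_def)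
    finally show "emeasure (distr M LP (\<lambda>\<omega>. rho nt T (X \<omega>))) A = emeasure (uniform_measure LP Q) A" ..
  qed
  then show ?thesis by (simp add: LP_def Q_def)
qed

end
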